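(* Let $(H,\alpha)$ be a monoidal Hom-Hopf algebra with bijective antipode, let $(\Gamma,\gamma)$ be a left-covariant $(H,\alpha)$-Hom-FODC with differential $d$, and let $\mathcal{T}_\Gamma$ be its quantum Hom-tangent space, with automorphism $\bar\alpha'(X)=X\circ\alpha^{-1}$. Then there is a unique bilinear form $\langle\cdot,\cdot\rangle:\mathcal{T}_\Gamma\times\Gamma\to k$ which is a morphism in $\widetilde{\mathcal{H}}(\mathcal{M}_k)$ (i.e. $\langle X\circ\alpha^{-1},\gamma(\varrho)\rangle=\langle X,\varrho\rangle$) such that $$\langle X,h\cdot dg\rangle=\varepsilon(h)X(g)\quad\text{for all }g,h\in H,\ X\in\mathcal{T}_\Gamma.$$ With respect to this form, $\mathcal{T}_\Gamma$ and ${}^{coH}\Gamma=\omega_\Gamma(H)$ (with automorphism $\gamma|_{{}^{coH}\Gamma}$) form a nondegenerate dual pairing. Moreover $\langle X,\omega_\Gamma(h)\rangle=X(\alpha^{-1}(h))$ for all $h\in H$, $X\in\mathcal{T}_\Gamma$.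
   Context: All vector spaces are over a field $k$; $\widetilde{\mathcal{H}}(\mathcal{M}_k)$ has objects $(M,\mu)$ with $\mu$ a linear automorphism, morphisms commuting with the automorphisms. A monoidal Hom-Hopf algebra $(H,\alpha)$: multiplication with $\alpha(ab)=\alpha(a)\alpha(b)$, $\alpha(1)=1$, $\alpha(a)(bc)=(ab)\alpha(c)$, $1a=a1=\alpha(a)$; comultiplication $\Delta(h)=h_1\otimes h_2$ and counit $\varepsilon$ (algebra maps commuting with $\alpha$) with $\alpha^{-1}(h_1)\otimes h_{21}\otimes h_{22}=h_{11}\otimes h_{12}\otimes\alpha^{-1}(h_2)$, $\varepsilon(h_1)h_2=h_1\varepsilon(h_2)=\alpha^{-1}(h)$; antipode $S$ commuting with $\alpha$ with $S(h_1)h_2=h_1S(h_2)=\varepsilon(h)1$. Hom-bimodule $(M,\mu)$: $\alpha(a)\cdot(b\cdot m)=(ab)\cdot\mu(m)$, $1\cdot m=\mu(m)$, $(m\cdot a)\cdot\alpha(b)=\mu(m)\cdot(ab)$, $m\cdot1=\mu(m)$, $\alpha(a)\cdot(m\cdot b)=(a\cdot m)\cdot\alpha(b)$. Left Hom-comodule: $\rho(m)=m_{(-1)}\otimes m_{(0)}$ with $\alpha^{-1}(m_{(-1)})\otimes m_{(0)(-1)}\otimes m_{(0)(0)}=m_{(-1)1}\otimes m_{(-1)2}\otimes\mu^{-1}(m_{(0)})$, $\varepsilon(m_{(-1)})m_{(0)}=\mu^{-1}(m)$. A Hom-FODC over $(H,\alpha)$: an $(H,\alpha)$-Hom-bimodule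 $(\Gamma,\gamma)$ with linear $d:H\to\Gamma$, $d(hg)=h\cdot dg+dh\cdot g$, $d\circ\alpha=\gamma\circ d$, $\Gamma$ spanned by $(h\cdot dg)\cdot f$. Left-covariant: there is a left Hom-coaction $\phi(\omega)=\omega_{(-1)}\otimes\omega_{(0)}$ of $(H,\alpha)$ on $(\Gamma,\gamma)$ with $\phi(\alpha(h)\cdot(\omega\cdot g))=\Delta(\alpha(h))(\phi(\omega)\Delta(g))$ and $\phi(dh)=h_1\otimes dh_2$ (componentwise products in $H\otimes\Gamma$). Set ${}^{coH}\Gamma:=\{\varrho\in\Gamma:\phi(\varrho)=1\otimes\gamma^{-1}(\varrho)\}$, $\omega_\Gamma(h):=S(h_1)\cdot dh_2$, $\omega_\Gamma(H)=\{\omega_\Gamma(h):h\in H\}$, $\mathcal{R}_\Gamma:=\{h\in\ker\varepsilon:\omega_\Gamma(h)=0\}$. The quantum Hom-tangent space is $\mathcal{T}_\Gamma:=\{X\in H':\ X(1)=0,\ X(h)=0\ \forall h\in\mathcal{R}_\Gamma\}$, where $H'$ is the linear dual of $H$. *)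

theory Defs
  imports Main "HOL.Vector_Spaces"
begin

text \<open>Elements of tensor products are represented by finite lists of pairs (triples)
of simple tensors; two such lists denote the same tensor iff every bilinear
(trilinear) k-valued form takes the same value on them (universal property).\<close>

definition bilin :: "('k::field \<Rightarrow> 'a::ab_group_add \<Rightarrow> 'a) \<Rightarrow> ('k \<Rightarrow> 'b::ab_group_add \<Rightarrow> 'b)
    \<Rightarrow> ('a \<Rightarrow> 'b \<Rightarrow> 'k) \<Rightarrow> bool" where
  "bilin s1 s2 f \<longleftrightarrow> (\<forall>x. Vector_Spaces.linear s2 times (f x)) \<and> (\<forall>y. Vector_Spaces.linear s1 times (\<lambda>x. f x y))"

definition trilin :: "('k::field \<Rightarrow> 'a::ab_group_add \<Rightarrow> 'a) \<Rightarrow> ('k \<Rightarrow> 'b::ab_group_add \<Rightarrow> 'b)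
    \<Rightarrow> ('k \<Rightarrow> 'c::ab_group_add \<Rightarrow> 'c) \<Rightarrow> ('a \<Rightarrow> 'b \<Rightarrow> 'c \<Rightarrow> 'k) \<Rightarrow> bool" where
  "trilin s1 s2 s3 f \<longleftrightarrow> (\<forall>x y. Vector_Spaces.linear s3 times (f x y)) \<and> (\<forall>x z. Vector_Spaces.linear s2 times (\<lambda>y. f x y z))
      \<and> (\<forall>y z. Vector_Spaces.linear s1 times (\<lambda>x. f x y z))"

definition eval2 :: "('a \<Rightarrow> 'b \<Rightarrow> 'k::comm_monoid_add) \<Rightarrow> ('a \<times> 'b) list \<Rightarrow> 'k" where
  "eval2 f xs = sum_list (map (\<lambda>(a, b). f a b) xs)"

definition eval3 :: "('a \<Rightarrow> 'b \<Rightarrow> 'c \<Rightarrow> 'k::comm_monoid_add) \<Rightarrow> ('a \<times> 'b \<times> 'c) list \<Rightarrow> 'k" where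
  "eval3 f xs = sum_list (map (\<lambda>(a, b, c). f a b c) xs)"

definition teq2 :: "('k::field \<Rightarrow> 'a::ab_group_add \<Rightarrow> 'a) \<Rightarrow> ('k \<Rightarrow> 'b::ab_group_add \<Rightarrow> 'b)
    \<Rightarrow> ('a \<times> 'b) list \<Rightarrow> ('a \<times> 'b) list \<Rightarrow> bool" where
  "teq2 s1 s2 xs ys \<longleftrightarrow> (\<forall>f. bilin s1 s2 f \<longrightarrow> eval2 f xs = eval2 f ys)"

definition teq3 :: "('k::field \<Rightarrow> 'a::ab_group_add \<Rightarrow> 'a) \<Rightarrow> ('k \<Rightarrow> 'b::ab_group_add \<Rightarrow> 'b)
    \<Rightarrow> ('k \<Rightarrow> 'c::ab_group_add \<Rightarrow> 'c)
    \<Rightarrow> ('a \<times> 'b \<times> 'c) list \<Rightarrow> ('a \<times> 'b \<times> 'c) list \<Rightarrow> bool" where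
  "teq3 s1 s2 s3 xs ys \<longleftrightarrow> (\<forall>f. trilin s1 s2 s3 f \<longrightarrow> eval3 f xs = eval3 f ys)"

definition tlinear :: "('k::field \<Rightarrow> 'v::ab_group_add \<Rightarrow> 'v) \<Rightarrow> ('k \<Rightarrow> 'a::ab_group_add \<Rightarrow> 'a)
    \<Rightarrow> ('k \<Rightarrow> 'b::ab_group_add \<Rightarrow> 'b) \<Rightarrow> ('v \<Rightarrow> ('a \<times> 'b) list) \<Rightarrow> bool" where
  "tlinear s s1 s2 D \<longleftrightarrow> (\<forall>f. bilin s1 s2 f \<longrightarrow> Vector_Spaces.linear s times (\<lambda>v. eval2 f (D v)))"

definition mon_hom_hopf :: "('k::field \<Rightarrow> 'h::ab_group_add \<Rightarrow> 'h) \<Rightarrow> ('h \<Rightarrow> 'h \<Rightarrow> 'h) \<Rightarrow> 'h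
    \<Rightarrow> ('h \<Rightarrow> 'h) \<Rightarrow> ('h \<Rightarrow> ('h \<times> 'h) list) \<Rightarrow> ('h \<Rightarrow> 'k) \<Rightarrow> ('h \<Rightarrow> 'h) \<Rightarrow> bool" where
  "mon_hom_hopf sH m u \<alpha> \<Delta> \<epsilon> S \<longleftrightarrow>
     vector_space sH \<and>
     (\<forall>a. Vector_Spaces.linear sH sH (m a)) \<and> (\<forall>b. Vector_Spaces.linear sH sH (\<lambda>a. m a b)) \<and>
     Vector_Spaces.linear sH sH \<alpha> \<and> bij \<alpha> \<and>
     (\<forall>a b. \<alpha> (m a b) = m (\<alpha> a) (\<alpha> b)) \<and> \<alpha> u = u \<and>
     (\<forall>a b c. m (\<alpha> a) (m b c) = m (m a b) (\<alpha> c)) \<and>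
     (\<forall>a. m u a = \<alpha> a \<and> m a u = \<alpha> a) \<and>
     tlinear sH sH sH \<Delta> \<and>
     (\<forall>a b. teq2 sH sH (\<Delta> (m a b)) [(m x y, m x' y'). (x, x') \<leftarrow> \<Delta> a, (y, y') \<leftarrow> \<Delta> b]) \<and>
     teq2 sH sH (\<Delta> u) [(u, u)] \<and>
     (\<forall>h. teq2 sH sH (\<Delta> (\<alpha> h)) (map (\<lambda>(x, y). (\<alpha> x, \<alpha> y)) (\<Delta> h))) \<and>
     (\<forall>h. teq3 sH sH sH
          [(inv \<alpha> x, y, z). (x, w) \<leftarrow> \<Delta> h, (y, z) \<leftarrow> \<Delta> w]
          [(y, z, inv \<alpha> x). (w, x) \<leftarrow> \<Delta> h, (y, z) \<leftarrow> \<Delta> w]) \<and>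
     Vector_Spaces.linear sH times \<epsilon> \<and> (\<forall>a b. \<epsilon> (m a b) = \<epsilon> a * \<epsilon> b) \<and> \<epsilon> u = 1 \<and>
     (\<forall>h. \<epsilon> (\<alpha> h) = \<epsilon> h) \<and>
     (\<forall>h. sum_list (map (\<lambda>(x, y). sH (\<epsilon> x) y) (\<Delta> h)) = inv \<alpha> h) \<and>
     (\<forall>h. sum_list (map (\<lambda>(x, y). sH (\<epsilon> y) x) (\<Delta> h)) = inv \<alpha> h) \<and>
     Vector_Spaces.linear sH sH S \<and> (\<forall>h. S (\<alpha> h) = \<alpha> (S h)) \<and>
     (\<forall>h. sum_list (map (\<lambda>(x, y). m (S x) y) (\<Delta> h)) = sH (\<epsilon> h) u) \<and>
     (\<forall>h. sum_list (map (\<lambda>(x, y). m x (S y)) (\<Delta> h)) = sH (\<epsilon> h) u) \<and>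
     bij S"

definition hom_bimodule :: "('k::field \<Rightarrow> 'h::ab_group_add \<Rightarrow> 'h) \<Rightarrow> ('h \<Rightarrow> 'h \<Rightarrow> 'h) \<Rightarrow> 'h
    \<Rightarrow> ('h \<Rightarrow> 'h) \<Rightarrow> ('k \<Rightarrow> 'g::ab_group_add \<Rightarrow> 'g) \<Rightarrow> ('g \<Rightarrow> 'g)
    \<Rightarrow> ('h \<Rightarrow> 'g \<Rightarrow> 'g) \<Rightarrow> ('g \<Rightarrow> 'h \<Rightarrow> 'g) \<Rightarrow> bool" where
  "hom_bimodule sH m u \<alpha> sG \<gamma> la ra \<longleftrightarrow>
     vector_space sG \<and> Vector_Spaces.linear sG sG \<gamma> \<and> bij \<gamma> \<and>
     (\<forall>a. Vector_Spaces.linear sG sG (la a)) \<and> (\<forall>v. Vector_Spaces.linear sH sG (\<lambda>a. la a v)) \<and>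
     (\<forall>v. Vector_Spaces.linear sH sG (ra v)) \<and> (\<forall>a. Vector_Spaces.linear sG sG (\<lambda>v. ra v a)) \<and>
     (\<forall>a v. \<gamma> (la a v) = la (\<alpha> a) (\<gamma> v)) \<and> (\<forall>a v. \<gamma> (ra v a) = ra (\<gamma> v) (\<alpha> a)) \<and>
     (\<forall>a b v. la (\<alpha> a) (la b v) = la (m a b) (\<gamma> v)) \<and> (\<forall>v. la u v = \<gamma> v) \<and>
     (\<forall>a b v. ra (ra v a) (\<alpha> b) = ra (\<gamma> v) (m a b)) \<and> (\<forall>v. ra v u = \<gamma> v) \<and>
     (\<forall>a b v. la (\<alpha> a) (ra v b) = ra (la a v) (\<alpha> b))"

definition hom_fodc :: "('k::field \<Rightarrow> 'h::ab_group_add \<Rightarrow> 'h) \<Rightarrow> ('h \<Rightarrow> 'h \<Rightarrow> 'h) \<Rightarrow> 'h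
    \<Rightarrow> ('h \<Rightarrow> 'h) \<Rightarrow> ('k \<Rightarrow> 'g::ab_group_add \<Rightarrow> 'g) \<Rightarrow> ('g \<Rightarrow> 'g)
    \<Rightarrow> ('h \<Rightarrow> 'g \<Rightarrow> 'g) \<Rightarrow> ('g \<Rightarrow> 'h \<Rightarrow> 'g) \<Rightarrow> ('h \<Rightarrow> 'g) \<Rightarrow> bool" where
  "hom_fodc sH m u \<alpha> sG \<gamma> la ra d \<longleftrightarrow>
     hom_bimodule sH m u \<alpha> sG \<gamma> la ra \<and> Vector_Spaces.linear sH sG d \<and>
     (\<forall>h g. d (m h g) = la h (d g) + ra (d h) g) \<and>
     (\<forall>h. d (\<alpha> h) = \<gamma> (d h)) \<and>
     (\<forall>w. w \<in> module.span sG {ra (la h (d g)) f | h g f. True})"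

definition hom_left_comodule :: "('k::field \<Rightarrow> 'h::ab_group_add \<Rightarrow> 'h)
    \<Rightarrow> ('h \<Rightarrow> 'h) \<Rightarrow> ('h \<Rightarrow> ('h \<times> 'h) list) \<Rightarrow> ('h \<Rightarrow> 'k)
    \<Rightarrow> ('k \<Rightarrow> 'g::ab_group_add \<Rightarrow> 'g) \<Rightarrow> ('g \<Rightarrow> 'g) \<Rightarrow> ('g \<Rightarrow> ('h \<times> 'g) list) \<Rightarrow> bool" where
  "hom_left_comodule sH \<alpha> \<Delta> \<epsilon> sG \<gamma> \<phi> \<longleftrightarrow>
     tlinear sG sH sG \<phi> \<and>
     (\<forall>v. teq2 sH sG (\<phi> (\<gamma> v)) (map (\<lambda>(x, w). (\<alpha> x, \<gamma> w)) (\<phi> v))) \<and>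
     (\<forall>v. teq3 sH sH sG
          [(inv \<alpha> x, y, w'). (x, w) \<leftarrow> \<phi> v, (y, w') \<leftarrow> \<phi> w]
          [(y, z, inv \<gamma> w). (x, w) \<leftarrow> \<phi> v, (y, z) \<leftarrow> \<Delta> x]) \<and>
     (\<forall>v. sum_list (map (\<lambda>(x, w). sG (\<epsilon> x) w) (\<phi> v)) = inv \<gamma> v)"

definition left_covariant :: "('k::field \<Rightarrow> 'h::ab_group_add \<Rightarrow> 'h) \<Rightarrow> ('h \<Rightarrow> 'h \<Rightarrow> 'h)
    \<Rightarrow> ('h \<Rightarrow> 'h) \<Rightarrow> ('h \<Rightarrow> ('h \<times> 'h) list) \<Rightarrow> ('h \<Rightarrow> 'k)
    \<Rightarrow> ('k \<Rightarrow> 'g::ab_group_add \<Rightarrow> 'g) \<Rightarrow> ('g \<Rightarrow> 'g)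
    \<Rightarrow> ('h \<Rightarrow> 'g \<Rightarrow> 'g) \<Rightarrow> ('g \<Rightarrow> 'h \<Rightarrow> 'g) \<Rightarrow> ('h \<Rightarrow> 'g) \<Rightarrow> ('g \<Rightarrow> ('h \<times> 'g) list) \<Rightarrow> bool" where
  "left_covariant sH m \<alpha> \<Delta> \<epsilon> sG \<gamma> la ra d \<phi> \<longleftrightarrow>
     hom_left_comodule sH \<alpha> \<Delta> \<epsilon> sG \<gamma> \<phi> \<and>
     (\<forall>h w g. teq2 sH sG (\<phi> (la (\<alpha> h) (ra w g)))
        [(m x (m y z), la x' (ra w' z')). (x, x') \<leftarrow> \<Delta> (\<alpha> h), (y, w') \<leftarrow> \<phi> w, (z, z') \<leftarrow> \<Delta> g]) \<and>
     (\<forall>h. teq2 sH sG (\<phi> (d h)) (map (\<lambda>(x, y). (x, d y)) (\<Delta> h)))"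

definition coinv :: "('k::field \<Rightarrow> 'h::ab_group_add \<Rightarrow> 'h) \<Rightarrow> 'h
    \<Rightarrow> ('k \<Rightarrow> 'g::ab_group_add \<Rightarrow> 'g) \<Rightarrow> ('g \<Rightarrow> 'g) \<Rightarrow> ('g \<Rightarrow> ('h \<times> 'g) list) \<Rightarrow> 'g set" where
  "coinv sH u sG \<gamma> \<phi> = {v. teq2 sH sG (\<phi> v) [(u, inv \<gamma> v)]}"

definition omegaG :: "('h \<Rightarrow> ('h \<times> 'h) list) \<Rightarrow> ('h \<Rightarrow> 'h) \<Rightarrow> ('h \<Rightarrow> 'g \<Rightarrow> 'g::ab_group_add)
    \<Rightarrow> ('h \<Rightarrow> 'g) \<Rightarrow> 'h \<Rightarrow> 'g" where
  "omegaG \<Delta> S la d h = sum_list (map (\<lambda>(x, y). la (S x) (d y)) (\<Delta> h))"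

definition RG :: "('h \<Rightarrow> ('h \<times> 'h) list) \<Rightarrow> ('h \<Rightarrow> 'k::zero) \<Rightarrow> ('h \<Rightarrow> 'h)
    \<Rightarrow> ('h \<Rightarrow> 'g \<Rightarrow> 'g::ab_group_add) \<Rightarrow> ('h \<Rightarrow> 'g) \<Rightarrow> 'h set" where
  "RG \<Delta> \<epsilon> S la d = {h. \<epsilon> h = 0 \<and> omegaG \<Delta> S la d h = 0}"

definition tangent :: "('k::field \<Rightarrow> 'h::ab_group_add \<Rightarrow> 'h) \<Rightarrow> 'h \<Rightarrow> ('h \<Rightarrow> ('h \<times> 'h) list)
    \<Rightarrow> ('h \<Rightarrow> 'k) \<Rightarrow> ('h \<Rightarrow> 'h) \<Rightarrow> ('h \<Rightarrow> 'g \<Rightarrow> 'g::ab_group_add) \<Rightarrow> ('h \<Rightarrow> 'g)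
    \<Rightarrow> ('h \<Rightarrow> 'k) set" where
  "tangent sH u \<Delta> \<epsilon> S la d =
     {X. Vector_Spaces.linear sH times X \<and> X u = 0 \<and> (\<forall>h \<in> RG \<Delta> \<epsilon> S la d. X h = 0)}"

definition good_form :: "('k::field \<Rightarrow> 'h::ab_group_add \<Rightarrow> 'h) \<Rightarrow> ('h \<Rightarrow> 'h) \<Rightarrow> ('h \<Rightarrow> 'k)
    \<Rightarrow> ('k \<Rightarrow> 'g::ab_group_add \<Rightarrow> 'g) \<Rightarrow> ('g \<Rightarrow> 'g) \<Rightarrow> ('h \<Rightarrow> 'g \<Rightarrow> 'g) \<Rightarrow> ('h \<Rightarrow> 'g)
    \<Rightarrow> ('h \<Rightarrow> 'k) set \<Rightarrow> (('h \<Rightarrow> 'k) \<Rightarrow> 'g \<Rightarrow> 'k) \<Rightarrow> bool" where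
  "good_form sH \<alpha> \<epsilon> sG \<gamma> la d T B \<longleftrightarrow>
     (\<forall>X \<in> T. Vector_Spaces.linear sG times (B X)) \<and>
     (\<forall>X \<in> T. \<forall>Y \<in> T. \<forall>v. B (\<lambda>h. X h + Y h) v = B X v + B Y v) \<and>
     (\<forall>X \<in> T. \<forall>c v. B (\<lambda>h. c * X h) v = c * B X v) \<and>
     (\<forall>X \<in> T. \<forall>v. B (X \<circ> inv \<alpha>) (\<gamma> v) = B X v) \<and>
     (\<forall>X \<in> T. \<forall>h g. B X (la h (d g)) = \<epsilon> h * X g)"

end

theory Submission
  imports Defs
begin


abbreviation lin where "lin \<equiv> Vector_Spaces.linear"

lemma vs_times: "vector_space ((*) :: 'k::field \<Rightarrow> 'k \<Rightarrow> 'k)"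
  by unfold_locales (auto simp: algebra_simps)

lemma lin_vsD: assumes "lin s1 s2 f" shows "vector_space s1" "vector_space s2"
  using assms by (auto simp: linear_iff)

lemma lin_add: "lin s1 s2 f \<Longrightarrow> f (x + y) = f x + f y"
  by (simp add: linear_iff)
lemma lin_scale: "lin s1 s2 f \<Longrightarrow> f (s1 c x) = s2 c (f x)"
  by (simp add: linear_iff)
lemma lin_zero: assumes "lin s1 s2 f" shows "f 0 = 0"
proof -
  have "f (0 + 0) = f 0 + f 0" by (rule lin_add[OF assms])
  then show ?thesis by simp
qed
lemma lin_diff: assumes "lin s1 s2 f" shows "f (x - y) = f x - f y"
proof -
  have "f ((x - y) + y) = f (x - y) + f y" by (rule lin_add[OF assms])
  then show ?thesis by simp
qed
lemma lin_sum_list: "lin s1 s2 f \<Longrightarrow> f (sum_list (map g xs)) = sum_list (map (\<lambda>x. f (g x)) xs)"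
  by (induct xs) (auto simp: lin_zero lin_add)

lemma sep_functional:
  fixes s :: "'k::field \<Rightarrow> 'v::ab_group_add \<Rightarrow> 'v"
  assumes vs: "vector_space s" and v: "v \<noteq> 0"
  shows "\<exists>l. lin s (*) l \<and> l v = 1"
proof -
  interpret vs: vector_space s by fact
  interpret vp: vector_space_pair s "(*) :: 'k \<Rightarrow> 'k \<Rightarrow> 'k"
    using vs vs_times by (simp add: vector_space_pair_def)
  have "vs.independent {v}" using v by simp
  from vp.linear_independent_extend[OF this, of "\<lambda>_. 1"] show ?thesis by auto
qed

lemma eq_by_functionals:
  fixes s :: "'k::field \<Rightarrow> 'v::ab_group_add \<Rightarrow> 'v"
  assumes vs: "vector_space s" and h: "\<And>l. lin s (*) l \<Longrightarrow> l x = l y"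
  shows "x = y"
proof (rule ccontr)
  assume "x \<noteq> y" then have "x - y \<noteq> 0" by simp
  from sep_functional[OF vs this] obtain l where l: "lin s (*) l" "l (x - y) = 1" by blast
  then have "l x - l y = 1" by (simp add: lin_diff)
  with h[OF l(1)] show False by simp
qed

lemma lin_compose: "lin s2 s3 g \<Longrightarrow> lin s1 s2 f \<Longrightarrow> lin s1 s3 (\<lambda>x. g (f x))"
  using Vector_Spaces.linear_compose[of s1 s2 f s3 g] by (simp add: o_def)

lemma eval2_Nil[simp]: "eval2 F [] = 0" and eval2_single[simp]: "eval2 F [(a,b)] = F a b"
  and eval2_Cons: "eval2 F ((a,b)#xs) = F a b + eval2 F xs"
  by (simp_all add: eval2_def)
lemma eval2_append[simp]: "eval2 F (xs @ ys) = eval2 F xs + eval2 F ys"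
  by (simp add: eval2_def)
lemma eval2_concat[simp]: "eval2 F (concat (map (\<lambda>(x,y). L x y) xs)) = eval2 (\<lambda>x y. eval2 F (L x y)) xs"
  by (induct xs) (auto simp: eval2_def)
lemma eval2_map[simp]: "eval2 F (map (\<lambda>(x,y). (A x y, B x y)) xs) = eval2 (\<lambda>x y. F (A x y) (B x y)) xs"
  by (induct xs) (auto simp: eval2_def)
lemma eval3_concat[simp]: "eval3 F (concat (map (\<lambda>(x,y). L x y) xs)) = eval2 (\<lambda>x y. eval3 F (L x y)) xs"
  by (induct xs) (auto simp: eval2_def eval3_def)
lemma eval3_map[simp]: "eval3 F (map (\<lambda>(x,y). (A x y, B x y, C x y)) xs) = eval2 (\<lambda>x y. F (A x y) (B x y) (C x y)) xs"
  by (induct xs) (auto simp: eval2_def eval3_def)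

lemma eval2_add: "eval2 (\<lambda>a b. F a b + G a b) xs = eval2 F xs + eval2 G xs"
  by (induct xs) (auto simp: eval2_def ac_simps)
lemma eval2_zero[simp]: "eval2 (\<lambda>a b. 0) xs = 0"
  by (induct xs) (auto simp: eval2_def)
lemma eval2_lin: "lin s1 s2 f \<Longrightarrow> f (eval2 F xs) = eval2 (\<lambda>a b. f (F a b)) xs"
  by (induct xs) (auto simp: eval2_def lin_zero lin_add)
lemma eval2_swap: "eval2 (\<lambda>a b. eval2 (\<lambda>c e. F a b c e) ys) xs = eval2 (\<lambda>c e. eval2 (\<lambda>a b. F a b c e) xs) ys"
proof (induct xs)
  case Nil then show ?case by simp
next
  case (Cons p xs) then show ?case
    by (cases p) (simp add: eval2_Cons eval2_add)
qed
lemma eval2_cong: "(\<And>a b. (a,b) \<in> set xs \<Longrightarrow> F a b = G a b) \<Longrightarrow> eval2 F xs = eval2 G xs"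
  unfolding eval2_def by (induct xs) auto

lemma lin_eval2_const:
  assumes "vector_space s" "vector_space s'" "\<And>a b. lin s s' (G a b)"
  shows "lin s s' (\<lambda>x. eval2 (\<lambda>a b. G a b x) L)"
proof -
  interpret s': vector_space s' by fact
  show ?thesis using assms(3)
  proof (induct L)
    case Nil then show ?case by (simp add: linear_iff assms)
  next
    case (Cons p L) then show ?case
      by (cases p) (simp add: eval2_Cons linear_iff assms s'.scale_right_distrib algebra_simps)
  qed
qed

definition bil where "bil s1 s2 s3 F \<longleftrightarrow> (\<forall>b. lin s1 s3 (\<lambda>a. F a b)) \<and> (\<forall>a. lin s2 s3 (F a))"

lemma teq2_transfer:
  assumes t: "teq2 s1 s2 xs ys" and vs: "vector_space s3"
    and l1: "\<And>b. lin s1 s3 (\<lambda>a. F a b)" and l2: "\<And>a. lin s2 s3 (\<lambda>b. F a b)"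
  shows "eval2 F xs = eval2 F ys"
proof (rule eq_by_functionals[OF vs])
  fix l assume l: "lin s3 (*) l"
  have "bilin s1 s2 (\<lambda>a b. l (F a b))"
    unfolding bilin_def using lin_compose[OF l l1] lin_compose[OF l l2] by auto
  with t have "eval2 (\<lambda>a b. l (F a b)) xs = eval2 (\<lambda>a b. l (F a b)) ys"
    unfolding teq2_def by blast
  then show "l (eval2 F xs) = l (eval2 F ys)" by (simp add: eval2_lin[OF l])
qed

lemma eval3_lin: "lin s1 s2 f \<Longrightarrow> f (eval3 F xs) = eval3 (\<lambda>a b c. f (F a b c)) xs"
  by (induct xs) (auto simp: eval3_def lin_zero lin_add)

lemma teq3_transfer:
  assumes t: "teq3 s1 s2 s3 xs ys" and vs: "vector_space s4"
    and l1: "\<And>b c. lin s1 s4 (\<lambda>a. F a b c)" and l2: "\<And>a c. lin s2 s4 (\<lambda>b. F a b c)"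
    and l3: "\<And>a b. lin s3 s4 (\<lambda>c. F a b c)"
  shows "eval3 F xs = eval3 F ys"
proof (rule eq_by_functionals[OF vs])
  fix l assume l: "lin s4 (*) l"
  have "trilin s1 s2 s3 (\<lambda>a b c. l (F a b c))"
    unfolding trilin_def using lin_compose[OF l l1] lin_compose[OF l l2] lin_compose[OF l l3] by auto
  with t have "eval3 (\<lambda>a b c. l (F a b c)) xs = eval3 (\<lambda>a b c. l (F a b c)) ys"
    unfolding teq3_def by blast
  then show "l (eval3 F xs) = l (eval3 F ys)" by (simp add: eval3_lin[OF l])
qed

lemma tlinear_lin:
  assumes t: "tlinear s s1 s2 D" and vs: "vector_space s" and vs3: "vector_space s3"
    and l1: "\<And>b. lin s1 s3 (\<lambda>a. F a b)" and l2: "\<And>a. lin s2 s3 (\<lambda>b. F a b)"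
  shows "lin s s3 (\<lambda>x. eval2 F (D x))"
proof -
  have key: "\<And>l. lin s3 (*) l \<Longrightarrow> lin s (*) (\<lambda>x. l (eval2 F (D x)))"
  proof -
    fix l assume l: "lin s3 (*) l"
    have "bilin s1 s2 (\<lambda>a b. l (F a b))"
      unfolding bilin_def using lin_compose[OF l l1] lin_compose[OF l l2] by auto
    with t have "lin s (*) (\<lambda>x. eval2 (\<lambda>a b. l (F a b)) (D x))" unfolding tlinear_def by blast
    then show "lin s (*) (\<lambda>x. l (eval2 F (D x)))" by (simp add: eval2_lin[OF l])
  qed
  show ?thesis unfolding linear_iff
  proof (intro conjI allI vs vs3)
    fix x y show "eval2 F (D (x + y)) = eval2 F (D x) + eval2 F (D y)"
      by (rule eq_by_functionals[OF vs3]) (simp add: key[THEN lin_add] lin_add)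
  next
    fix c x show "eval2 F (D (s c x)) = s3 c (eval2 F (D x))"
      by (rule eq_by_functionals[OF vs3]) (simp add: key[THEN lin_scale] lin_scale)
  qed
qed


lemma bilin_bil: "bilin s1 s2 F \<longleftrightarrow> bil s1 s2 (*) F"
  unfolding bilin_def bil_def by auto

lemma L_id: "vector_space s \<Longrightarrow> lin s s (\<lambda>x. x)"
  by (simp add: linear_iff)
lemma L_add: "lin s s' f \<Longrightarrow> lin s s' g \<Longrightarrow> lin s s' (\<lambda>x. f x + g x)"
  by (simp add: linear_iff vector_space.vector_space_assms(1))
lemma L_mul1: "lin s (*) f \<Longrightarrow> lin s (*) (\<lambda>x. c * f x)"
  by (simp add: linear_iff algebra_simps)
lemma L_mul2: "lin s (*) f \<Longrightarrow> lin s (*) (\<lambda>x. f x * c)"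
  by (simp add: linear_iff algebra_simps)
lemma L_scal: "vector_space s' \<Longrightarrow> lin s s' f \<Longrightarrow> lin s s' (\<lambda>x. s' c (f x))"
  by (simp add: linear_iff vector_space.vector_space_assms(1) vector_space.vector_space_assms(3) mult.commute)
lemma L_scalk: "vector_space s' \<Longrightarrow> lin s (*) f \<Longrightarrow> lin s s' (\<lambda>x. s' (f x) c)"
  by (simp add: linear_iff vector_space.vector_space_assms(2) vector_space.vector_space_assms(3))
lemma L_bil1: "bil s1 s2 s3 F \<Longrightarrow> lin s s1 f \<Longrightarrow> lin s s3 (\<lambda>x. F (f x) c)"
  unfolding bil_def by (rule lin_compose[of s1 s3 "\<lambda>a. F a c"]) auto
lemma L_bil2: "bil s1 s2 s3 F \<Longrightarrow> lin s s2 f \<Longrightarrow> lin s s3 (\<lambda>x. F c (f x))"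
  unfolding bil_def by (rule lin_compose[of s2 s3 "F c"]) auto



lemma lin_inv:
  assumes l: "lin s s f" and b: "bij f" shows "lin s s (inv f)"
proof -
  have fi: "\<And>x. f (inv f x) = x" using b by (simp add: bij_is_surj surj_f_inv_f)
  have if_: "\<And>x. inv f (f x) = x" using b by (simp add: bij_is_inj)
  show ?thesis unfolding linear_iff
  proof (intro conjI allI)
    show "vector_space s" using l by (simp add: linear_iff)
    show "vector_space s" using l by (simp add: linear_iff)
    fix x y
    have "inv f (x + y) = inv f (f (inv f x) + f (inv f y))" by (simp add: fi)
    also have "\<dots> = inv f x + inv f y" by (simp add: lin_add[OF l, symmetric] if_)
    finally show "inv f (x + y) = inv f x + inv f y" .
  next
    fix c x
    have "inv f (s c x) = inv f (s c (f (inv f x)))" by (simp add: fi)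
    also have "\<dots> = s c (inv f x)" by (simp add: lin_scale[OF l, symmetric] if_)
    finally show "inv f (s c x) = s c (inv f x)" .
  qed
qed

locale HH =
  fixes sH :: "'k::field \<Rightarrow> 'h::ab_group_add \<Rightarrow> 'h"
    and m :: "'h \<Rightarrow> 'h \<Rightarrow> 'h" and u :: 'h and \<alpha> :: "'h \<Rightarrow> 'h"
    and \<Delta> :: "'h \<Rightarrow> ('h \<times> 'h) list" and \<epsilon> :: "'h \<Rightarrow> 'k" and S :: "'h \<Rightarrow> 'h"
    and sG :: "'k \<Rightarrow> 'g::ab_group_add \<Rightarrow> 'g" and \<gamma> :: "'g \<Rightarrow> 'g"
    and la :: "'h \<Rightarrow> 'g \<Rightarrow> 'g" and ra :: "'g \<Rightarrow> 'h \<Rightarrow> 'g"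
    and d :: "'h \<Rightarrow> 'g" and \<phi> :: "'g \<Rightarrow> ('h \<times> 'g) list"
  assumes A1: "mon_hom_hopf sH m u \<alpha> \<Delta> \<epsilon> S"
    and A2: "hom_fodc sH m u \<alpha> sG \<gamma> la ra d"
    and A3: "left_covariant sH m \<alpha> \<Delta> \<epsilon> sG \<gamma> la ra d \<phi>"
begin

lemma vsH: "vector_space sH" and m_lin2: "\<And>a. lin sH sH (m a)" and m_lin1: "\<And>b. lin sH sH (\<lambda>a. m a b)"
  and \<alpha>_lin: "lin sH sH \<alpha>" and \<alpha>_bij: "bij \<alpha>" and \<alpha>_m: "\<And>a b. \<alpha> (m a b) = m (\<alpha> a) (\<alpha> b)"
  and \<alpha>_u: "\<alpha> u = u" and assoc: "\<And>a b c. m (\<alpha> a) (m b c) = m (m a b) (\<alpha> c)"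
  and unit_l: "\<And>a. m u a = \<alpha> a" and unit_r: "\<And>a. m a u = \<alpha> a"
  and \<Delta>_tlin: "tlinear sH sH sH \<Delta>"
  and \<Delta>_m: "\<And>a b. teq2 sH sH (\<Delta> (m a b)) [(m x y, m x' y'). (x, x') \<leftarrow> \<Delta> a, (y, y') \<leftarrow> \<Delta> b]"
  and \<Delta>_u: "teq2 sH sH (\<Delta> u) [(u, u)]"
  and \<Delta>_\<alpha>: "\<And>h. teq2 sH sH (\<Delta> (\<alpha> h)) (map (\<lambda>(x, y). (\<alpha> x, \<alpha> y)) (\<Delta> h))"
  and \<Delta>_coassoc: "\<And>h. teq3 sH sH sH
          [(inv \<alpha> x, y, z). (x, w) \<leftarrow> \<Delta> h, (y, z) \<leftarrow> \<Delta> w]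
          [(y, z, inv \<alpha> x). (w, x) \<leftarrow> \<Delta> h, (y, z) \<leftarrow> \<Delta> w]"
  and \<epsilon>_lin: "lin sH (*) \<epsilon>" and \<epsilon>_m: "\<And>a b. \<epsilon> (m a b) = \<epsilon> a * \<epsilon> b" and \<epsilon>_u: "\<epsilon> u = 1"
  and \<epsilon>_\<alpha>: "\<And>h. \<epsilon> (\<alpha> h) = \<epsilon> h"
  and counit_l: "\<And>h. eval2 (\<lambda>x y. sH (\<epsilon> x) y) (\<Delta> h) = inv \<alpha> h"
  and counit_r: "\<And>h. eval2 (\<lambda>x y. sH (\<epsilon> y) x) (\<Delta> h) = inv \<alpha> h"
  and S_lin: "lin sH sH S" and S_\<alpha>: "\<And>h. S (\<alpha> h) = \<alpha> (S h)"
  and anti_l: "\<And>h. eval2 (\<lambda>x y. m (S x) y) (\<Delta> h) = sH (\<epsilon> h) u"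
  and anti_r: "\<And>h. eval2 (\<lambda>x y. m x (S y)) (\<Delta> h) = sH (\<epsilon> h) u"
  using A1 unfolding mon_hom_hopf_def eval2_def by auto

lemma vsG: "vector_space sG" and \<gamma>_lin: "lin sG sG \<gamma>" and \<gamma>_bij: "bij \<gamma>"
  and la_lin2: "\<And>a. lin sG sG (la a)" and la_lin1: "\<And>v. lin sH sG (\<lambda>a. la a v)"
  and ra_lin2: "\<And>v. lin sH sG (ra v)" and ra_lin1: "\<And>a. lin sG sG (\<lambda>v. ra v a)"
  and \<gamma>_la: "\<And>a v. \<gamma> (la a v) = la (\<alpha> a) (\<gamma> v)" and \<gamma>_ra: "\<And>a v. \<gamma> (ra v a) = ra (\<gamma> v) (\<alpha> a)"
  and la_assoc: "\<And>a b v. la (\<alpha> a) (la b v) = la (m a b) (\<gamma> v)" and la_u: "\<And>v. la u v = \<gamma> v"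
  and ra_assoc: "\<And>a b v. ra (ra v a) (\<alpha> b) = ra (\<gamma> v) (m a b)" and ra_u: "\<And>v. ra v u = \<gamma> v"
  and la_ra: "\<And>a b v. la (\<alpha> a) (ra v b) = ra (la a v) (\<alpha> b)"
  and d_lin: "lin sH sG d" and d_leib: "\<And>h g. d (m h g) = la h (d g) + ra (d h) g"
  and d_\<alpha>: "\<And>h. d (\<alpha> h) = \<gamma> (d h)"
  and span_all: "\<And>w. w \<in> module.span sG {ra (la h (d g)) f | h g f. True}"
  using A2 unfolding hom_fodc_def hom_bimodule_def by auto

lemma \<phi>_tlin: "tlinear sG sH sG \<phi>"
  and \<phi>_\<gamma>: "\<And>v. teq2 sH sG (\<phi> (\<gamma> v)) (map (\<lambda>(x, w). (\<alpha> x, \<gamma> w)) (\<phi> v))"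
  and \<phi>_coassoc: "\<And>v. teq3 sH sH sG
          [(inv \<alpha> x, y, w'). (x, w) \<leftarrow> \<phi> v, (y, w') \<leftarrow> \<phi> w]
          [(y, z, inv \<gamma> w). (x, w) \<leftarrow> \<phi> v, (y, z) \<leftarrow> \<Delta> x]"
  and \<phi>_counit: "\<And>v. eval2 (\<lambda>x w. sG (\<epsilon> x) w) (\<phi> v) = inv \<gamma> v"
  and cov_mod: "\<And>h w g. teq2 sH sG (\<phi> (la (\<alpha> h) (ra w g)))
        [(m x (m y z), la x' (ra w' z')). (x, x') \<leftarrow> \<Delta> (\<alpha> h), (y, w') \<leftarrow> \<phi> w, (z, z') \<leftarrow> \<Delta> g]"
  and cov_d: "\<And>h. teq2 sH sG (\<phi> (d h)) (map (\<lambda>(x, y). (x, d y)) (\<Delta> h))"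
  using A3 unfolding left_covariant_def hom_left_comodule_def eval2_def by auto

lemma vsk: "vector_space ((*) :: 'k \<Rightarrow> 'k \<Rightarrow> 'k)" by (rule vs_times)

lemma i\<alpha>_lin: "lin sH sH (inv \<alpha>)" by (rule lin_inv[OF \<alpha>_lin \<alpha>_bij])
lemma i\<gamma>_lin: "lin sG sG (inv \<gamma>)" by (rule lin_inv[OF \<gamma>_lin \<gamma>_bij])

lemma \<alpha>_inv[simp]: "\<alpha> (inv \<alpha> x) = x" by (simp add: \<alpha>_bij bij_is_surj surj_f_inv_f)
lemma inv_\<alpha>[simp]: "inv \<alpha> (\<alpha> x) = x" by (simp add: \<alpha>_bij bij_is_inj)
lemma \<gamma>_inv[simp]: "\<gamma> (inv \<gamma> x) = x" by (simp add: \<gamma>_bij bij_is_surj surj_f_inv_f)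
lemma inv_\<gamma>[simp]: "inv \<gamma> (\<gamma> x) = x" by (simp add: \<gamma>_bij bij_is_inj)
lemma i\<alpha>_eq: "inv \<alpha> x = y \<longleftrightarrow> x = \<alpha> y" by auto
lemma i\<alpha>_m: "inv \<alpha> (m a b) = m (inv \<alpha> a) (inv \<alpha> b)"
  by (metis \<alpha>_inv \<alpha>_m inv_\<alpha>)
lemma i\<alpha>_u[simp]: "inv \<alpha> u = u" by (metis \<alpha>_u inv_\<alpha>)
lemma \<epsilon>_i\<alpha>[simp]: "\<epsilon> (inv \<alpha> h) = \<epsilon> h" by (metis \<alpha>_inv \<epsilon>_\<alpha>)
lemma S_i\<alpha>: "S (inv \<alpha> h) = inv \<alpha> (S h)" by (metis \<alpha>_inv S_\<alpha> inv_\<alpha>)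
lemma i\<gamma>_la: "inv \<gamma> (la a v) = la (inv \<alpha> a) (inv \<gamma> v)" by (metis \<gamma>_inv \<gamma>_la inv_\<gamma> \<alpha>_inv)
lemma i\<gamma>_ra: "inv \<gamma> (ra v a) = ra (inv \<gamma> v) (inv \<alpha> a)" by (metis \<gamma>_inv \<gamma>_ra inv_\<gamma> \<alpha>_inv)
lemma d_i\<alpha>: "d (inv \<alpha> h) = inv \<gamma> (d h)" by (metis \<alpha>_inv d_\<alpha> inv_\<gamma>)

lemma L_\<alpha>: "lin s sH f \<Longrightarrow> lin s sH (\<lambda>x. \<alpha> (f x))" by (rule lin_compose[OF \<alpha>_lin])
lemma L_i\<alpha>: "lin s sH f \<Longrightarrow> lin s sH (\<lambda>x. inv \<alpha> (f x))" by (rule lin_compose[OF i\<alpha>_lin])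
lemma L_S: "lin s sH f \<Longrightarrow> lin s sH (\<lambda>x. S (f x))" by (rule lin_compose[OF S_lin])
lemma L_m1: "lin s sH f \<Longrightarrow> lin s sH (\<lambda>x. m (f x) c)" by (rule lin_compose[OF m_lin1])
lemma L_m2: "lin s sH f \<Longrightarrow> lin s sH (\<lambda>x. m c (f x))" by (rule lin_compose[OF m_lin2])
lemma L_\<epsilon>: "lin s sH f \<Longrightarrow> lin s (*) (\<lambda>x. \<epsilon> (f x))" by (rule lin_compose[OF \<epsilon>_lin])
lemma L_d: "lin s sH f \<Longrightarrow> lin s sG (\<lambda>x. d (f x))" by (rule lin_compose[OF d_lin])
lemma L_\<gamma>: "lin s sG f \<Longrightarrow> lin s sG (\<lambda>x. \<gamma> (f x))" by (rule lin_compose[OF \<gamma>_lin])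
lemma L_i\<gamma>: "lin s sG f \<Longrightarrow> lin s sG (\<lambda>x. inv \<gamma> (f x))" by (rule lin_compose[OF i\<gamma>_lin])
lemma L_la1: "lin s sH f \<Longrightarrow> lin s sG (\<lambda>x. la (f x) c)" by (rule lin_compose[OF la_lin1])
lemma L_la2: "lin s sG f \<Longrightarrow> lin s sG (\<lambda>x. la c (f x))" by (rule lin_compose[OF la_lin2])
lemma L_ra1: "lin s sG f \<Longrightarrow> lin s sG (\<lambda>x. ra (f x) c)" by (rule lin_compose[OF ra_lin1])
lemma L_ra2: "lin s sH f \<Longrightarrow> lin s sG (\<lambda>x. ra c (f x))" by (rule lin_compose[OF ra_lin2])
lemma L_\<Delta>: "vector_space s' \<Longrightarrow> lin s sH f \<Longrightarrow> (\<And>b. lin sH s' (\<lambda>a. F a b)) \<Longrightarrow> (\<And>a. lin sH s' (\<lambda>b. F a b))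
   \<Longrightarrow> lin s s' (\<lambda>x. eval2 F (\<Delta> (f x)))"
  by (rule lin_compose[of sH s' "\<lambda>x. eval2 F (\<Delta> x)"]) (rule tlinear_lin[OF \<Delta>_tlin vsH], auto)
lemma L_\<phi>: "vector_space s' \<Longrightarrow> lin s sG f \<Longrightarrow> (\<And>b. lin sH s' (\<lambda>a. F a b)) \<Longrightarrow> (\<And>a. lin sG s' (\<lambda>b. F a b))
   \<Longrightarrow> lin s s' (\<lambda>x. eval2 F (\<phi> (f x)))"
  by (rule lin_compose[of sG s' "\<lambda>x. eval2 F (\<phi> x)"]) (rule tlinear_lin[OF \<phi>_tlin vsG], auto)

lemmas LI = L_id L_add L_mul1 L_mul2 L_scal[OF vsH] L_scal[OF vsG] L_scalk[OF vsH] L_scalk[OF vsG] lin_eval2_const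
  L_\<alpha> L_i\<alpha> L_S L_m1 L_m2 L_\<epsilon> L_d L_\<gamma> L_i\<gamma> L_la1 L_la2 L_ra1 L_ra2 L_\<Delta> L_\<phi> vsH vsG vsk

lemma bilD: "bil s1 s2 s3 F \<Longrightarrow> lin s1 s3 (\<lambda>a. F a b)" "bil s1 s2 s3 F \<Longrightarrow> lin s2 s3 (\<lambda>b. F a b)"
  by (auto simp: bil_def)
lemma bilI: "(\<And>b. lin s1 s3 (\<lambda>a. F a b)) \<Longrightarrow> (\<And>a. lin s2 s3 (\<lambda>b. F a b)) \<Longrightarrow> bil s1 s2 s3 F"
  by (auto simp: bil_def)

lemma \<Delta>\<alpha>_eval: "vector_space s' \<Longrightarrow> bil sH sH s' F
   \<Longrightarrow> eval2 F (\<Delta> (\<alpha> h)) = eval2 (\<lambda>x y. F (\<alpha> x) (\<alpha> y)) (\<Delta> h)"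
  using teq2_transfer[OF \<Delta>_\<alpha>, of s' F h] by (simp add: bilD)

lemma \<Delta>i\<alpha>_eval: assumes "vector_space s'" "bil sH sH s' F"
   shows "eval2 F (\<Delta> (inv \<alpha> h)) = eval2 (\<lambda>x y. F (inv \<alpha> x) (inv \<alpha> y)) (\<Delta> h)"
proof -
  have "eval2 (\<lambda>x y. F (inv \<alpha> x) (inv \<alpha> y)) (\<Delta> (\<alpha> (inv \<alpha> h))) = eval2 (\<lambda>x y. F (inv \<alpha> (\<alpha> x)) (inv \<alpha> (\<alpha> y))) (\<Delta> (inv \<alpha> h))"
    by (rule \<Delta>\<alpha>_eval[of s'], rule assms, rule bilI; intro LI L_bil1[OF assms(2)] L_bil2[OF assms(2)] assms(1))
  then show ?thesis by simp
qed

end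

context HH begin

lemma eval3_Pair: "eval3 K (map (Pair a) xs) = eval2 (K a) xs"
  by (induct xs) (auto simp: eval2_def eval3_def)

lemma coassoc_eval:
  assumes vs: "vector_space s'" and l1: "\<And>b c. lin sH s' (\<lambda>a. K a b c)"
    and l2: "\<And>a c. lin sH s' (\<lambda>b. K a b c)" and l3: "\<And>a b. lin sH s' (\<lambda>c. K a b c)"
  shows "eval2 (\<lambda>w x. eval2 (\<lambda>y z. K y z (inv \<alpha> x)) (\<Delta> w)) (\<Delta> h) = eval2 (\<lambda>x w. eval2 (\<lambda>y z. K (inv \<alpha> x) y z) (\<Delta> w)) (\<Delta> h)"
  using teq3_transfer[OF \<Delta>_coassoc[of h] vs l1 l2 l3] by (simp add: eval3_Pair)

lemma mm: "m (m a b) c = m (\<alpha> a) (m b (inv \<alpha> c))"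
  using assoc[of a b "inv \<alpha> c"] by simp

definition conv where "conv f g a b = eval2 (\<lambda>a1 a2. eval2 (\<lambda>b1 b2. m (f a1 b1) (g a2 b2)) (\<Delta> b)) (\<Delta> a)"
definition bl where "bl f \<longleftrightarrow> bil sH sH sH f \<and> (\<forall>a b. f (\<alpha> a) (\<alpha> b) = \<alpha> (f a b))"

lemma bl_i\<alpha>: "bl f \<Longrightarrow> inv \<alpha> (f a b) = f (inv \<alpha> a) (inv \<alpha> b)"
  unfolding bl_def by (metis \<alpha>_inv inv_\<alpha>)

lemma conv_assoc:
  assumes f: "bl f" and g: "bl g" and h: "bl h"
  shows "conv (conv f g) h a b = conv f (conv g h) a b"
proof -
  have bf: "bil sH sH sH f" and bg: "bil sH sH sH g" and bh: "bil sH sH sH h" using f g h by (auto simp: bl_def)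
  note LL = LI L_bil1[OF bf] L_bil2[OF bf] L_bil1[OF bg] L_bil2[OF bg] L_bil1[OF bh] L_bil2[OF bh]
  have fa: "\<And>x y. \<alpha> (f x y) = f (\<alpha> x) (\<alpha> y)" using f by (simp add: bl_def)
  have "conv (conv f g) h a b = eval2 (\<lambda>a1 a2. eval2 (\<lambda>b1 b2. eval2 (\<lambda>p q. eval2 (\<lambda>r t.
      m (f (\<alpha> p) (\<alpha> r)) (m (g q t) (h (inv \<alpha> a2) (inv \<alpha> b2)))) (\<Delta> b1)) (\<Delta> a1)) (\<Delta> b)) (\<Delta> a)"
    unfolding conv_def by (simp add: eval2_lin[OF m_lin1] mm fa bl_i\<alpha>[OF h])
  also have "\<dots> = eval2 (\<lambda>a1 a2. eval2 (\<lambda>p q. eval2 (\<lambda>b1 b2. eval2 (\<lambda>r t.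
      m (f (\<alpha> p) (\<alpha> r)) (m (g q t) (h (inv \<alpha> a2) (inv \<alpha> b2)))) (\<Delta> b1)) (\<Delta> b)) (\<Delta> a1)) (\<Delta> a)"
    by (simp add: eval2_swap[where ys="\<Delta> b"])
  also have "\<dots> = eval2 (\<lambda>x w. eval2 (\<lambda>y z. eval2 (\<lambda>b1 b2. eval2 (\<lambda>r t.
      m (f (\<alpha> (inv \<alpha> x)) (\<alpha> r)) (m (g y t) (h z (inv \<alpha> b2)))) (\<Delta> b1)) (\<Delta> b)) (\<Delta> w)) (\<Delta> a)"
    by (rule coassoc_eval[of sH "\<lambda>p q z. eval2 (\<lambda>b1 b2. eval2 (\<lambda>r t.
      m (f (\<alpha> p) (\<alpha> r)) (m (g q t) (h z (inv \<alpha> b2)))) (\<Delta> b1)) (\<Delta> b)" a]) (intro LL)+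
  also have "\<dots> = eval2 (\<lambda>x w. eval2 (\<lambda>y z. eval2 (\<lambda>b1 b2. eval2 (\<lambda>r t.
      m (f x (\<alpha> r)) (m (g y t) (h z (inv \<alpha> b2)))) (\<Delta> b1)) (\<Delta> b)) (\<Delta> w)) (\<Delta> a)"
    by simp
  also have "\<dots> = eval2 (\<lambda>x w. eval2 (\<lambda>y z. eval2 (\<lambda>x' w'. eval2 (\<lambda>y' z'.
      m (f x x') (m (g y y') (h z z'))) (\<Delta> w')) (\<Delta> b)) (\<Delta> w)) (\<Delta> a)"
  proof -
    have "eval2 (\<lambda>b1 b2. eval2 (\<lambda>r t. m (f x (\<alpha> r)) (m (g y t) (h z (inv \<alpha> b2)))) (\<Delta> b1)) (\<Delta> b) =
          eval2 (\<lambda>x' w'. eval2 (\<lambda>y' z'. m (f x (\<alpha> (inv \<alpha> x'))) (m (g y y') (h z z'))) (\<Delta> w')) (\<Delta> b)" for x y z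
      by (rule coassoc_eval[of sH "\<lambda>r t z'. m (f x (\<alpha> r)) (m (g y t) (h z z'))" b]) (intro LL)+
    then show ?thesis by simp
  qed
  also have "\<dots> = conv f (conv g h) a b"
    unfolding conv_def by (simp add: eval2_lin[OF m_lin2] eval2_swap[where ys="\<Delta> b"])
  finally show ?thesis .
qed


definition ee where "ee a b = sH (\<epsilon> a * \<epsilon> b) u"

lemma m_scale2: "m x (sH c y) = sH c (m x y)" by (rule lin_scale[OF m_lin2])
lemma m_scale1: "m (sH c x) y = sH c (m x y)" using lin_scale[OF m_lin1] by simp
lemma \<alpha>_scale: "\<alpha> (sH c x) = sH c (\<alpha> x)" by (rule lin_scale[OF \<alpha>_lin])
lemma i\<alpha>_scale: "inv \<alpha> (sH c x) = sH c (inv \<alpha> x)" by (rule lin_scale[OF i\<alpha>_lin])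
lemma sH_sH: "sH a (sH b x) = sH (a * b) x" using vsH by (simp add: vector_space.vector_space_assms(3))

lemma sH_lin: "lin sH sH (sH c)" using L_scal[OF vsH L_id[OF vsH]] by simp

lemma conv_unit_r:
  assumes f: "bl f" shows "conv f ee a b = f a b"
proof -
  have bf: "bil sH sH sH f" and fa: "\<And>x y. \<alpha> (f x y) = f (\<alpha> x) (\<alpha> y)" using f by (auto simp: bl_def)
  have fs1: "f (sH c x) y = sH c (f x y)" for c x y using lin_scale[OF bilD(1)[OF bf]] by simp
  have fs2: "f x (sH c y) = sH c (f x y)" for c x y using lin_scale[OF bilD(2)[OF bf]] by simp
  have "f a b = \<alpha> (f (inv \<alpha> a) (inv \<alpha> b))" by (simp add: fa)
  also have "\<dots> = \<alpha> (f (eval2 (\<lambda>x y. sH (\<epsilon> y) x) (\<Delta> a)) (eval2 (\<lambda>x y. sH (\<epsilon> y) x) (\<Delta> b)))"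
    by (simp add: counit_r)
  also have "\<dots> = conv f ee a b"
    unfolding conv_def ee_def
    by (simp add: eval2_lin[OF bilD(1)[OF bf]] eval2_lin[OF bilD(2)[OF bf]] eval2_lin[OF \<alpha>_lin]
         fs1 fs2 \<alpha>_scale m_scale2 unit_r sH_sH mult.commute eval2_lin[OF sH_lin] eval2_swap[where ys="\<Delta> a"])
  finally show ?thesis ..
qed

lemma conv_unit_l:
  assumes f: "bl f" shows "conv ee f a b = f a b"
proof -
  have bf: "bil sH sH sH f" and fa: "\<And>x y. \<alpha> (f x y) = f (\<alpha> x) (\<alpha> y)" using f by (auto simp: bl_def)
  have fs1: "f (sH c x) y = sH c (f x y)" for c x y using lin_scale[OF bilD(1)[OF bf]] by simp
  have fs2: "f x (sH c y) = sH c (f x y)" for c x y using lin_scale[OF bilD(2)[OF bf]] by simp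
  have "f a b = \<alpha> (f (inv \<alpha> a) (inv \<alpha> b))" by (simp add: fa)
  also have "\<dots> = \<alpha> (f (eval2 (\<lambda>x y. sH (\<epsilon> x) y) (\<Delta> a)) (eval2 (\<lambda>x y. sH (\<epsilon> x) y) (\<Delta> b)))"
    by (simp add: counit_l)
  also have "\<dots> = conv ee f a b"
    unfolding conv_def ee_def
    by (simp add: eval2_lin[OF bilD(1)[OF bf]] eval2_lin[OF bilD(2)[OF bf]] eval2_lin[OF \<alpha>_lin]
         fs1 fs2 \<alpha>_scale m_scale1 unit_l sH_sH mult.commute eval2_lin[OF sH_lin] eval2_swap[where ys="\<Delta> a"])
  finally show ?thesis ..
qed


lemma conv_Sm: "conv (\<lambda>a b. S (m a b)) m a b = ee a b"
proof -
  have "conv (\<lambda>a b. S (m a b)) m a b = eval2 (\<lambda>x y. m (S x) y) [(m x y, m x' y'). (x, x') \<leftarrow> \<Delta> a, (y, y') \<leftarrow> \<Delta> b]"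
    unfolding conv_def by simp
  also have "\<dots> = eval2 (\<lambda>x y. m (S x) y) (\<Delta> (m a b))"
    by (rule teq2_transfer[OF \<Delta>_m vsH, symmetric]) (intro LI)+
  also have "\<dots> = ee a b" by (simp add: anti_l ee_def \<epsilon>_m)
  finally show ?thesis .
qed

lemma assoc': "m b (m x y) = m (m (inv \<alpha> b) x) (\<alpha> y)"
  using assoc[of "inv \<alpha> b" x y] by simp

lemma m4: "m (m a b) (m c e) = m (\<alpha> a) (m (inv \<alpha> (m b c)) e)"
proof -
  have "m (m a b) (m c e) = m (\<alpha> a) (m b (m (inv \<alpha> c) (inv \<alpha> e)))" by (simp add: mm i\<alpha>_m)
  also have "\<dots> = m (\<alpha> a) (m (inv \<alpha> (m b c)) e)"
    using assoc'[of b "inv \<alpha> c" "inv \<alpha> e"] by (simp add: i\<alpha>_m)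
  finally show ?thesis .
qed

lemma conv_mS: "conv m (\<lambda>a b. m (S b) (S a)) a b = ee a b"
proof -
  have "conv m (\<lambda>a b. m (S b) (S a)) a b =
     eval2 (\<lambda>a1 a2. eval2 (\<lambda>b1 b2. m (\<alpha> a1) (m (inv \<alpha> (m b1 (S b2))) (S a2))) (\<Delta> b)) (\<Delta> a)"
    unfolding conv_def by (simp add: m4)
  also have "\<dots> = eval2 (\<lambda>a1 a2. m (\<alpha> a1) (m (inv \<alpha> (eval2 (\<lambda>b1 b2. m b1 (S b2)) (\<Delta> b))) (S a2))) (\<Delta> a)"
    by (simp add: eval2_lin[OF m_lin1] eval2_lin[OF m_lin2] eval2_lin[OF i\<alpha>_lin])
  also have "\<dots> = eval2 (\<lambda>a1 a2. sH (\<epsilon> b) (\<alpha> (m a1 (S a2)))) (\<Delta> a)"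
    by (simp add: anti_r i\<alpha>_scale m_scale1 m_scale2 unit_l \<alpha>_m)
  also have "\<dots> = sH (\<epsilon> b) (\<alpha> (eval2 (\<lambda>a1 a2. m a1 (S a2)) (\<Delta> a)))"
    by (simp add: eval2_lin[OF sH_lin] eval2_lin[OF \<alpha>_lin])
  also have "\<dots> = ee a b" by (simp add: anti_r ee_def \<alpha>_scale \<alpha>_u sH_sH mult.commute)
  finally show ?thesis .
qed

lemma bl_m: "bl m" unfolding bl_def by (auto intro!: bilI m_lin1 m_lin2 simp: \<alpha>_m)
lemma bl_L: "bl (\<lambda>a b. S (m a b))"
proof -
  have "bil sH sH sH (\<lambda>a b. S (m a b))" by (rule bilI; intro LI)
  then show ?thesis unfolding bl_def by (simp add: \<alpha>_m[symmetric] S_\<alpha>)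
qed
lemma bl_R: "bl (\<lambda>a b. m (S b) (S a))"
proof -
  have "bil sH sH sH (\<lambda>a b. m (S b) (S a))" by (rule bilI; intro LI)
  then show ?thesis unfolding bl_def by (simp add: \<alpha>_m S_\<alpha>)
qed
lemma bl_ee: "bl ee"
proof -
  have "bil sH sH sH ee" unfolding ee_def by (rule bilI; intro LI)
  then show ?thesis unfolding bl_def ee_def by (simp add: \<epsilon>_\<alpha> \<alpha>_scale \<alpha>_u)
qed

lemma S_anti: "S (m a b) = m (S b) (S a)"
proof -
  have e1: "conv m (\<lambda>a b. m (S b) (S a)) = ee" by (rule ext, rule ext, rule conv_mS)
  have e2: "conv (\<lambda>a b. S (m a b)) m = ee" by (rule ext, rule ext, rule conv_Sm)
  have "S (m a b) = conv (\<lambda>a b. S (m a b)) ee a b" by (rule conv_unit_r[OF bl_L, symmetric])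
  also have "\<dots> = conv (\<lambda>a b. S (m a b)) (conv m (\<lambda>a b. m (S b) (S a))) a b" by (simp add: e1)
  also have "\<dots> = conv (conv (\<lambda>a b. S (m a b)) m) (\<lambda>a b. m (S b) (S a)) a b"
    by (rule conv_assoc[OF bl_L bl_m bl_R, symmetric])
  also have "\<dots> = m (S b) (S a)" by (simp add: e2 conv_unit_l[OF bl_R])
  finally show ?thesis .
qed

end

context HH begin

definition conv2 where "conv2 f g c = concat (map (\<lambda>(c1,c2). concat (map (\<lambda>(x,y). map (\<lambda>(x',y'). (m x x', m y y')) (g c2)) (f c1))) (\<Delta> c))"
definition eq2 where "eq2 f g \<longleftrightarrow> (\<forall>c. teq2 sH sH (f c) (g c))"
definition gl where "gl f \<longleftrightarrow> tlinear sH sH sH f \<and> (\<forall>c. teq2 sH sH (f (\<alpha> c)) (map (\<lambda>(x, y). (\<alpha> x, \<alpha> y)) (f c)))"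
definition ee2 where "ee2 c = [(sH (\<epsilon> c) u, u)]"

lemma teq2I: "(\<And>F. bil sH sH (*) F \<Longrightarrow> eval2 F xs = eval2 F ys) \<Longrightarrow> teq2 sH sH xs ys"
  unfolding teq2_def bilin_bil by blast
lemma eq2I: "(\<And>F c. bil sH sH (*) F \<Longrightarrow> eval2 F (f c) = eval2 F (g c)) \<Longrightarrow> eq2 f g"
  unfolding eq2_def by (blast intro: teq2I)
lemma eq2D: "eq2 f g \<Longrightarrow> bil sH sH (*) F \<Longrightarrow> eval2 F (f c) = eval2 F (g c)"
  unfolding eq2_def teq2_def bilin_bil by blast
lemma eq2_trans: "eq2 f g \<Longrightarrow> eq2 g h \<Longrightarrow> eq2 f h"
  unfolding eq2_def teq2_def by metis
lemma eq2_sym: "eq2 f g \<Longrightarrow> eq2 g f"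
  unfolding eq2_def teq2_def by metis

lemmas eq2_trans_calc[trans] = eq2_trans

lemma L_tl: "tlinear sH sH sH f \<Longrightarrow> lin s sH g \<Longrightarrow> (\<And>b. lin sH (*) (\<lambda>a. F a b)) \<Longrightarrow> (\<And>a. lin sH (*) (\<lambda>b. F a b))
   \<Longrightarrow> lin s (*) (\<lambda>x. eval2 F (f (g x)))"
  by (rule lin_compose[of sH "(*)" "\<lambda>x. eval2 F (f x)"]) (rule tlinear_lin[OF _ vsH vsk], auto)

lemma teqk: "teq2 sH sH xs ys \<Longrightarrow> bil sH sH (*) F \<Longrightarrow> eval2 F xs = eval2 F ys"
  unfolding teq2_def bilin_bil by blast

lemma gl_i\<alpha>: assumes f: "gl f" and F: "bil sH sH (*) F"
  shows "eval2 F (f (inv \<alpha> c)) = eval2 (\<lambda>x y. F (inv \<alpha> x) (inv \<alpha> y)) (f c)"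
proof -
  have t: "teq2 sH sH (f (\<alpha> (inv \<alpha> c))) (map (\<lambda>(x, y). (\<alpha> x, \<alpha> y)) (f (inv \<alpha> c)))" using f unfolding gl_def by blast
  have b: "bil sH sH (*) (\<lambda>x y. F (inv \<alpha> x) (inv \<alpha> y))" by (rule bilI; intro LI L_bil1[OF F] L_bil2[OF F])
  from teqk[OF t b] show ?thesis by simp
qed

lemma gl_\<alpha>: assumes f: "gl f" and F: "bil sH sH (*) F"
  shows "eval2 F (f (\<alpha> c)) = eval2 (\<lambda>x y. F (\<alpha> x) (\<alpha> y)) (f c)"
proof -
  have t: "teq2 sH sH (f (\<alpha> c)) (map (\<lambda>(x, y). (\<alpha> x, \<alpha> y)) (f c))" using f by (simp add: gl_def)
  from teqk[OF t F] show ?thesis by simp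
qed

lemma conv2_cong: assumes "eq2 f f'" "eq2 g g'" shows "eq2 (conv2 f g) (conv2 f' g')"
proof (rule eq2I)
  fix F c assume F: "bil sH sH (*) F"
  have 1: "eval2 (\<lambda>x' y'. F (m x x') (m y y')) (g c2) = eval2 (\<lambda>x' y'. F (m x x') (m y y')) (g' c2)" for x y c2
    by (rule eq2D[OF assms(2)], rule bilI; intro LI L_bil1[OF F] L_bil2[OF F])
  have 2: "eval2 (\<lambda>x y. eval2 (\<lambda>x' y'. F (m x x') (m y y')) (g' c2)) (f c1) = eval2 (\<lambda>x y. eval2 (\<lambda>x' y'. F (m x x') (m y y')) (g' c2)) (f' c1)" for c1 c2
    by (rule eq2D[OF assms(1)], rule bilI; intro LI L_bil1[OF F] L_bil2[OF F])
  show "eval2 F (conv2 f g c) = eval2 F (conv2 f' g' c)"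
    unfolding conv2_def by (simp add: 1 2)
qed

lemma swap_\<Delta>: "eval2 (\<lambda>a b. eval2 (\<lambda>c e. G a b c e) (\<Delta> w)) xs = eval2 (\<lambda>c e. eval2 (\<lambda>a b. G a b c e) xs) (\<Delta> w)"
  by (rule eval2_swap)

lemma conv2_assoc: assumes f: "gl f" and g: "gl g" and h: "gl h"
  shows "eq2 (conv2 (conv2 f g) h) (conv2 f (conv2 g h))"
proof (rule eq2I)
  fix F c assume F: "bil sH sH (*) F"
  have tf: "tlinear sH sH sH f" and tg: "tlinear sH sH sH g" and th: "tlinear sH sH sH h"
    using f g h by (auto simp: gl_def)
  note LL = LI L_bil1[OF F] L_bil2[OF F] L_tl[OF tf] L_tl[OF tg] L_tl[OF th]
  have s1: "eval2 (\<lambda>z z'. F (m (m x x') z) (m (m y y') z')) (h c2) =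
       eval2 (\<lambda>z z'. F (m (\<alpha> x) (m x' z)) (m (\<alpha> y) (m y' z'))) (h (inv \<alpha> c2))" for x x' y y' c2
  proof -
    have "eval2 (\<lambda>z z'. F (m (m x x') z) (m (m y y') z')) (h (\<alpha> (inv \<alpha> c2))) =
       eval2 (\<lambda>z z'. F (m (m x x') (\<alpha> z)) (m (m y y') (\<alpha> z'))) (h (inv \<alpha> c2))"
      by (rule gl_\<alpha>[OF h], rule bilI; intro LL)
    then show ?thesis by (simp add: assoc)
  qed
  have s3: "eval2 (\<lambda>x y. eval2 (\<lambda>x' y'. eval2 (\<lambda>z z'. F (m (\<alpha> x) (m x' z)) (m (\<alpha> y) (m y' z'))) (h r)) (g q)) (f (inv \<alpha> p)) =
            eval2 (\<lambda>x y. eval2 (\<lambda>x' y'. eval2 (\<lambda>z z'. F (m x (m x' z)) (m y (m y' z'))) (h r)) (g q)) (f p)" for p q r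
    by (subst gl_i\<alpha>[OF f], (rule bilI; intro LL), simp)
  have "eval2 F (conv2 (conv2 f g) h c) =
     eval2 (\<lambda>c1 c2. eval2 (\<lambda>p q. eval2 (\<lambda>x y. eval2 (\<lambda>x' y'. eval2 (\<lambda>z z'. F (m (m x x') z) (m (m y y') z')) (h c2)) (g q)) (f p)) (\<Delta> c1)) (\<Delta> c)"
    unfolding conv2_def by simp
  also have "\<dots> = eval2 (\<lambda>c1 c2. eval2 (\<lambda>p q. eval2 (\<lambda>x y. eval2 (\<lambda>x' y'. eval2 (\<lambda>z z'. F (m (\<alpha> x) (m x' z)) (m (\<alpha> y) (m y' z'))) (h (inv \<alpha> c2))) (g q)) (f p)) (\<Delta> c1)) (\<Delta> c)"
    by (simp add: s1)
  also have "\<dots> = eval2 (\<lambda>x0 w. eval2 (\<lambda>y0 z0. eval2 (\<lambda>x y. eval2 (\<lambda>x' y'. eval2 (\<lambda>z z'. F (m (\<alpha> x) (m x' z)) (m (\<alpha> y) (m y' z'))) (h z0)) (g y0)) (f (inv \<alpha> x0))) (\<Delta> w)) (\<Delta> c)"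
    by (rule coassoc_eval[of "(*)" "\<lambda>p q r. eval2 (\<lambda>x y. eval2 (\<lambda>x' y'. eval2 (\<lambda>z z'. F (m (\<alpha> x) (m x' z)) (m (\<alpha> y) (m y' z'))) (h r)) (g q)) (f p)"]) (intro LL)+
  also have "\<dots> = eval2 (\<lambda>x0 w. eval2 (\<lambda>y0 z0. eval2 (\<lambda>x y. eval2 (\<lambda>x' y'. eval2 (\<lambda>z z'. F (m x (m x' z)) (m y (m y' z'))) (h z0)) (g y0)) (f x0)) (\<Delta> w)) (\<Delta> c)"
    by (simp add: s3)
  also have "\<dots> = eval2 F (conv2 f (conv2 g h) c)"
    unfolding conv2_def by (simp add: swap_\<Delta>)
  finally show "eval2 F (conv2 (conv2 f g) h c) = eval2 F (conv2 f (conv2 g h) c)" .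
qed


lemma tl_sum: assumes t: "tlinear sH sH sH f" and F: "bil sH sH (*) F"
  shows "eval2 F (f (eval2 G xs)) = eval2 (\<lambda>a b. eval2 F (f (G a b))) xs"
proof -
  have "lin sH (*) (\<lambda>c. eval2 F (f c))" by (intro L_tl[OF t] LI L_bil1[OF F] L_bil2[OF F])
  from eval2_lin[OF this] show ?thesis .
qed
lemma tl_scale: assumes t: "tlinear sH sH sH f" and F: "bil sH sH (*) F"
  shows "eval2 F (f (sH c x)) = c * eval2 F (f x)"
proof -
  have "lin sH (*) (\<lambda>c. eval2 F (f c))" by (intro L_tl[OF t] LI L_bil1[OF F] L_bil2[OF F])
  from lin_scale[OF this] show ?thesis by simp
qed

lemma eval2_mult: "eval2 (\<lambda>a b. (c::'a::semiring_0) * G a b) xs = c * eval2 G xs"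
  by (induct xs) (auto simp: eval2_def algebra_simps)
lemma eval2_mult2: "eval2 (\<lambda>a b. G a b * (c::'a::semiring_0)) xs = eval2 G xs * c"
  by (induct xs) (auto simp: eval2_def algebra_simps)

lemma bF_scale1: "bil sH sH (*) F \<Longrightarrow> F (sH c x) y = c * F x y"
  using lin_scale[OF bilD(1)] by fastforce
lemma bF_scale2: "bil sH sH (*) F \<Longrightarrow> F x (sH c y) = c * F x y"
  using lin_scale[OF bilD(2)] by fastforce

lemma conv2_unit_r: assumes f: "gl f" shows "eq2 (conv2 f ee2) f"
proof (rule eq2I)
  fix F c assume F: "bil sH sH (*) F"
  have tf: "tlinear sH sH sH f" using f by (simp add: gl_def)
  have bF': "bil sH sH (*) (\<lambda>x y. F (\<alpha> x) (\<alpha> y))" by (rule bilI; intro LI L_bil1[OF F] L_bil2[OF F])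
  have "eval2 F (f c) = eval2 (\<lambda>x y. F (\<alpha> x) (\<alpha> y)) (f (inv \<alpha> c))"
    using gl_\<alpha>[OF f F, of "inv \<alpha> c"] by simp
  also have "\<dots> = eval2 (\<lambda>x y. F (\<alpha> x) (\<alpha> y)) (f (eval2 (\<lambda>x y. sH (\<epsilon> y) x) (\<Delta> c)))"
    by (simp add: counit_r)
  also have "\<dots> = eval2 F (conv2 f ee2 c)"
    unfolding conv2_def ee2_def
    by (simp add: tl_sum[OF tf bF'] tl_scale[OF tf bF'] m_scale2 unit_r bF_scale1[OF F] eval2_mult[symmetric])
  finally show "eval2 F (conv2 f ee2 c) = eval2 F (f c)" ..
qed

lemma conv2_unit_l: assumes f: "gl f" shows "eq2 (conv2 ee2 f) f"
proof (rule eq2I)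
  fix F c assume F: "bil sH sH (*) F"
  have tf: "tlinear sH sH sH f" using f by (simp add: gl_def)
  have bF': "bil sH sH (*) (\<lambda>x y. F (\<alpha> x) (\<alpha> y))" by (rule bilI; intro LI L_bil1[OF F] L_bil2[OF F])
  have "eval2 F (f c) = eval2 (\<lambda>x y. F (\<alpha> x) (\<alpha> y)) (f (inv \<alpha> c))"
    using gl_\<alpha>[OF f F, of "inv \<alpha> c"] by simp
  also have "\<dots> = eval2 (\<lambda>x y. F (\<alpha> x) (\<alpha> y)) (f (eval2 (\<lambda>x y. sH (\<epsilon> x) y) (\<Delta> c)))"
    by (simp add: counit_l)
  also have "\<dots> = eval2 F (conv2 ee2 f c)"
    unfolding conv2_def ee2_def
    by (simp add: tl_sum[OF tf bF'] tl_scale[OF tf bF'] m_scale1 unit_l bF_scale1[OF F] eval2_mult[symmetric])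
  finally show "eval2 F (conv2 ee2 f c) = eval2 F (f c)" ..
qed


lemma gl_\<Delta>: "gl \<Delta>" unfolding gl_def using \<Delta>_tlin \<Delta>_\<alpha> by simp

lemma gl_\<Delta>S: "gl (\<lambda>c. \<Delta> (S c))"
  unfolding gl_def
proof (intro conjI allI)
  show "tlinear sH sH sH (\<lambda>c. \<Delta> (S c))" unfolding tlinear_def bilin_bil
    by (intro allI impI, intro LI bilD, assumption+)
  fix c show "teq2 sH sH (\<Delta> (S (\<alpha> c))) (map (\<lambda>(x, y). (\<alpha> x, \<alpha> y)) (\<Delta> (S c)))"
    by (simp add: S_\<alpha> \<Delta>_\<alpha>)
qed

definition RR where "RR c = map (\<lambda>(x,y). (S y, S x)) (\<Delta> c)"

lemma gl_RR: "gl RR"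
  unfolding gl_def
proof (intro conjI allI)
  show "tlinear sH sH sH RR" unfolding tlinear_def bilin_bil RR_def eval2_map
  proof (intro allI impI)
    fix F :: "'h \<Rightarrow> 'h \<Rightarrow> 'k" assume F: "bil sH sH (*) F"
    show "lin sH (*) (\<lambda>v. eval2 (\<lambda>x y. F (S y) (S x)) (\<Delta> v))" by (intro LI L_bil1[OF F] L_bil2[OF F])
  qed
  fix c show "teq2 sH sH (RR (\<alpha> c)) (map (\<lambda>(x, y). (\<alpha> x, \<alpha> y)) (RR c))"
  proof (rule teq2I)
    fix F assume F: "bil sH sH (*) F"
    show "eval2 F (RR (\<alpha> c)) = eval2 F (map (\<lambda>(x, y). (\<alpha> x, \<alpha> y)) (RR c))"
      unfolding RR_def eval2_map by (subst \<Delta>\<alpha>_eval[OF vsk], (rule bilI; intro LI L_bil1[OF F] L_bil2[OF F]), simp add: S_\<alpha>)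
  qed
qed

lemma conv2_S\<Delta>: "eq2 (conv2 (\<lambda>c. \<Delta> (S c)) \<Delta>) ee2"
proof (rule eq2I)
  fix F c assume F: "bil sH sH (*) F"
  have p: "eval2 (\<lambda>x y. eval2 (\<lambda>x' y'. F (m x x') (m y y')) (\<Delta> c2)) (\<Delta> (S c1)) = eval2 F (\<Delta> (m (S c1) c2))" for c1 c2
    using teqk[OF \<Delta>_m[of "S c1" c2] F] by simp
  have "eval2 F (conv2 (\<lambda>c. \<Delta> (S c)) \<Delta> c) = eval2 (\<lambda>c1 c2. eval2 F (\<Delta> (m (S c1) c2))) (\<Delta> c)"
    unfolding conv2_def by (simp add: p)
  also have "\<dots> = eval2 F (\<Delta> (eval2 (\<lambda>x y. m (S x) y) (\<Delta> c)))"
    by (simp add: tl_sum[OF \<Delta>_tlin F])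
  also have "\<dots> = eval2 F (ee2 c)"
    by (simp add: anti_l tl_scale[OF \<Delta>_tlin F] teqk[OF \<Delta>_u F] ee2_def bF_scale1[OF F])
  finally show "eval2 F (conv2 (\<lambda>c. \<Delta> (S c)) \<Delta> c) = eval2 F (ee2 c)" .
qed


lemma conv2_\<Delta>R: "eq2 (conv2 \<Delta> RR) ee2"
proof (rule eq2I)
  fix F c assume F: "bil sH sH (*) F"
  note LL = LI L_bil1[OF F] L_bil2[OF F]
  have p3: "eval2 (\<lambda>a b. F (m A (S b)) (m B (S a))) (\<Delta> (\<alpha> z)) = eval2 (\<lambda>a b. F (m A (S (\<alpha> b))) (m B (S (\<alpha> a)))) (\<Delta> z)" for A B z
    by (rule \<Delta>\<alpha>_eval[OF vsk], rule bilI; intro LL)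
  have p4: "eval2 (\<lambda>y0 z0. eval2 (\<lambda>a b. F (m A (S (\<alpha> b))) (m y0 (S (\<alpha> a)))) (\<Delta> z0)) (\<Delta> w) =
     eval2 (\<lambda>w' x'. eval2 (\<lambda>y z. F (m A (S (\<alpha> (inv \<alpha> x')))) (m (\<alpha> y) (S (\<alpha> z)))) (\<Delta> w')) (\<Delta> w)" for A w
  proof -
    have "eval2 (\<lambda>w' x'. eval2 (\<lambda>y z. F (m A (S (\<alpha> (inv \<alpha> x')))) (m (\<alpha> y) (S (\<alpha> z)))) (\<Delta> w')) (\<Delta> w) =
      eval2 (\<lambda>x w. eval2 (\<lambda>y z. F (m A (S (\<alpha> z))) (m (\<alpha> (inv \<alpha> x)) (S (\<alpha> y)))) (\<Delta> w)) (\<Delta> w)"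
      by (rule coassoc_eval[of "(*)" "\<lambda>p q r. F (m A (S (\<alpha> r))) (m (\<alpha> p) (S (\<alpha> q)))"]) (intro LL)+
    then show ?thesis by simp
  qed
  have p5: "eval2 (\<lambda>y z. F A (m (\<alpha> y) (\<alpha> (S z)))) (\<Delta> w') = \<epsilon> w' * F A u" for A w'
  proof -
    have "eval2 (\<lambda>y z. F A (m (\<alpha> y) (\<alpha> (S z)))) (\<Delta> w') = F A (\<alpha> (eval2 (\<lambda>y z. m y (S z)) (\<Delta> w')))"
      by (simp add: eval2_lin[OF L_bil2[OF F L_\<alpha>[OF L_id[OF vsH]]]] \<alpha>_m)
    also have "\<dots> = \<epsilon> w' * F A u" by (simp add: anti_r \<alpha>_scale \<alpha>_u bF_scale2[OF F])
    finally show ?thesis .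
  qed
  have p6: "eval2 (\<lambda>w' x'. \<epsilon> w' * F (m A (S x')) u) (\<Delta> w) = F (m A (S (inv \<alpha> w))) u" for A w
  proof -
    have "F (m A (S (inv \<alpha> w))) u = F (m A (S (eval2 (\<lambda>x y. sH (\<epsilon> x) y) (\<Delta> w)))) u" by (simp add: counit_l)
    also have "\<dots> = eval2 (\<lambda>w' x'. \<epsilon> w' * F (m A (S x')) u) (\<Delta> w)"
      by (simp add: eval2_lin[OF L_bil1[OF F L_m2[OF L_S[OF L_id[OF vsH]]]]] lin_scale[OF S_lin] m_scale2 bF_scale1[OF F])
    finally show ?thesis by simp
  qed
  have "eval2 F (conv2 \<Delta> RR c) = eval2 (\<lambda>c1 c2. eval2 (\<lambda>p q. eval2 (\<lambda>a b. F (m p (S b)) (m q (S a))) (\<Delta> (\<alpha> (inv \<alpha> c2)))) (\<Delta> c1)) (\<Delta> c)"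
    unfolding conv2_def RR_def by (simp del: map_map)
  also have "\<dots> = eval2 (\<lambda>x0 w. eval2 (\<lambda>y0 z0. eval2 (\<lambda>a b. F (m (inv \<alpha> x0) (S b)) (m y0 (S a))) (\<Delta> (\<alpha> z0))) (\<Delta> w)) (\<Delta> c)"
    by (rule coassoc_eval[of "(*)" "\<lambda>p q r. eval2 (\<lambda>a b. F (m p (S b)) (m q (S a))) (\<Delta> (\<alpha> r))"]) (intro LL)+
  also have "\<dots> = eval2 (\<lambda>x0 w. eval2 (\<lambda>w' x'. \<epsilon> w' * F (m (inv \<alpha> x0) (S x')) u) (\<Delta> w)) (\<Delta> c)"
    by (simp only: p3 p4, simp add: S_\<alpha> p5)
  also have "\<dots> = eval2 (\<lambda>x0 w. F (m (inv \<alpha> x0) (S (inv \<alpha> w))) u) (\<Delta> c)"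
    by (simp add: p6)
  also have "\<dots> = F (inv \<alpha> (eval2 (\<lambda>x w. m x (S w)) (\<Delta> c))) u"
    by (simp add: eval2_lin[OF L_bil1[OF F L_i\<alpha>[OF L_id[OF vsH]]]] i\<alpha>_m S_i\<alpha>)
  also have "\<dots> = eval2 F (ee2 c)" by (simp add: anti_r i\<alpha>_scale ee2_def)
  finally show "eval2 F (conv2 \<Delta> RR c) = eval2 F (ee2 c)" .
qed

lemma eq2_refl: "eq2 f f" unfolding eq2_def teq2_def by simp

lemma \<Delta>S_eq: "eq2 (\<lambda>c. \<Delta> (S c)) RR"
proof -
  have "eq2 (\<lambda>c. \<Delta> (S c)) (conv2 (\<lambda>c. \<Delta> (S c)) ee2)" by (rule eq2_sym[OF conv2_unit_r[OF gl_\<Delta>S]])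
  also have "eq2 (conv2 (\<lambda>c. \<Delta> (S c)) ee2) (conv2 (\<lambda>c. \<Delta> (S c)) (conv2 \<Delta> RR))"
    by (rule conv2_cong[OF eq2_refl eq2_sym[OF conv2_\<Delta>R]])
  also have "eq2 (conv2 (\<lambda>c. \<Delta> (S c)) (conv2 \<Delta> RR)) (conv2 (conv2 (\<lambda>c. \<Delta> (S c)) \<Delta>) RR)"
    by (rule eq2_sym[OF conv2_assoc[OF gl_\<Delta>S gl_\<Delta> gl_RR]])
  also have "eq2 (conv2 (conv2 (\<lambda>c. \<Delta> (S c)) \<Delta>) RR) (conv2 ee2 RR)"
    by (rule conv2_cong[OF conv2_S\<Delta> eq2_refl])
  also have "eq2 (conv2 ee2 RR) RR" by (rule conv2_unit_l[OF gl_RR])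
  finally show ?thesis .
qed

end

context HH begin

interpretation vG: vector_space sG by (rule vsG)
interpretation vH: vector_space sH by (rule vsH)

abbreviation "\<omega> \<equiv> omegaG \<Delta> S la d"
definition PP where "PP v = eval2 (\<lambda>a w. la (S a) w) (\<phi> v)"

lemma \<omega>_def': "\<omega> g = eval2 (\<lambda>x y. la (S x) (d y)) (\<Delta> g)"
  by (simp add: omegaG_def eval2_def)

lemma \<Delta>S_eval: assumes "vector_space s'" "bil sH sH s' F"
  shows "eval2 F (\<Delta> (S h)) = eval2 (\<lambda>x y. F (S y) (S x)) (\<Delta> h)"
proof -
  have "teq2 sH sH (\<Delta> (S h)) (RR h)" using \<Delta>S_eq by (simp add: eq2_def)
  from teq2_transfer[OF this assms(1) bilD(1)[OF assms(2)] bilD(2)[OF assms(2)]] show ?thesis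
    by (simp add: RR_def)
qed

lemma \<Delta>u_eval: "vector_space s' \<Longrightarrow> bil sH sH s' F \<Longrightarrow> eval2 F (\<Delta> u) = F u u"
  using teq2_transfer[OF \<Delta>_u, of s' F] by (simp add: bilD)

lemma S_u: "S u = u"
proof -
  have "eval2 (\<lambda>x y. m (S x) y) (\<Delta> u) = m (S u) u"
    by (subst \<Delta>u_eval[OF vsH], (rule bilI; intro LI), simp)
  then have "m (S u) u = u" using anti_l[of u] \<epsilon>_u by (simp add: vH.scale_one)
  then show ?thesis by (simp add: unit_r S_\<alpha>[symmetric] \<alpha>_u)
qed

lemma \<gamma>0: "\<gamma> 0 = 0" by (rule lin_zero[OF \<gamma>_lin])
lemma d_u: "d u = 0"
proof -
  have "d (m u u) = \<gamma> (d u) + \<gamma> (d u)" by (simp add: d_leib la_u ra_u)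
  moreover have "d (m u u) = \<gamma> (d u)" by (simp add: unit_l d_\<alpha>)
  ultimately have "\<gamma> (d u) = 0" by simp
  moreover have "d u = \<gamma> (d u)" using d_\<alpha>[of u] \<alpha>_u by simp
  ultimately show ?thesis by simp
qed

lemma \<omega>_lin: "lin sH sG \<omega>" unfolding \<omega>_def' by (intro LI)
lemma \<omega>_u: "\<omega> u = 0"
proof -
  have "\<omega> u = la (S u) (d u)" unfolding \<omega>_def'
    by (subst \<Delta>u_eval[OF vsG], (rule bilI; intro LI), simp)
  then show ?thesis by (simp add: d_u lin_zero[OF la_lin2])
qed
lemma \<omega>_\<alpha>: "\<omega> (\<alpha> g) = \<gamma> (\<omega> g)"
proof -
  have "\<omega> (\<alpha> g) = eval2 (\<lambda>x y. la (S (\<alpha> x)) (d (\<alpha> y))) (\<Delta> g)"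
    unfolding \<omega>_def' by (rule \<Delta>\<alpha>_eval[OF vsG], rule bilI; intro LI)
  then show ?thesis unfolding \<omega>_def' by (simp add: eval2_lin[OF \<gamma>_lin] \<gamma>_la S_\<alpha> d_\<alpha>)
qed
lemma \<omega>_i\<alpha>: "\<omega> (inv \<alpha> g) = inv \<gamma> (\<omega> g)"
  by (metis \<omega>_\<alpha> \<alpha>_inv inv_\<gamma>)

lemma \<phi>\<gamma>_eval: "vector_space s' \<Longrightarrow> bil sH sG s' F \<Longrightarrow> eval2 F (\<phi> (\<gamma> v)) = eval2 (\<lambda>x w. F (\<alpha> x) (\<gamma> w)) (\<phi> v)"
  using teq2_transfer[OF \<phi>_\<gamma>, of s' F v] by (simp add: bilD)
lemma \<phi>d_eval: "vector_space s' \<Longrightarrow> bil sH sG s' F \<Longrightarrow> eval2 F (\<phi> (d h)) = eval2 (\<lambda>x y. F x (d y)) (\<Delta> h)"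
  using teq2_transfer[OF cov_d, of s' F h] by (simp add: bilD)

lemma \<phi>lad_eval: assumes vs: "vector_space s'" and F: "bil sH sG s' F"
  shows "eval2 F (\<phi> (la h (d g))) = eval2 (\<lambda>h1 h2. eval2 (\<lambda>g1 g2. F (m h1 g1) (la h2 (d g2))) (\<Delta> g)) (\<Delta> h)"
proof -
  note LL = LI L_bil1[OF F] L_bil2[OF F] vs
  have e: "la h (d g) = la (\<alpha> (inv \<alpha> h)) (ra (d (inv \<alpha> g)) u)"
    by (simp add: ra_u d_\<alpha>[symmetric])
  have "eval2 F (\<phi> (la h (d g))) = eval2 F [(m x (m y z), la x' (ra w' z')). (x, x') \<leftarrow> \<Delta> (\<alpha> (inv \<alpha> h)), (y, w') \<leftarrow> \<phi> (d (inv \<alpha> g)), (z, z') \<leftarrow> \<Delta> u]"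
    unfolding e by (rule teq2_transfer[OF cov_mod vs]; intro LL)
  also have "\<dots> = eval2 (\<lambda>x x'. eval2 (\<lambda>y w'. eval2 (\<lambda>z z'. F (m x (m y z)) (la x' (ra w' z'))) (\<Delta> u)) (\<phi> (d (inv \<alpha> g)))) (\<Delta> h)"
    by simp
  also have "\<dots> = eval2 (\<lambda>x x'. eval2 (\<lambda>y w'. F (m x (\<alpha> y)) (la x' (\<gamma> w'))) (\<phi> (d (inv \<alpha> g)))) (\<Delta> h)"
  proof -
    have "eval2 (\<lambda>z z'. F (m x (m y z)) (la x' (ra w' z'))) (\<Delta> u) = F (m x (\<alpha> y)) (la x' (\<gamma> w'))" for x x' y w'
      by (subst \<Delta>u_eval[OF vs], (rule bilI; intro LL), simp add: unit_r ra_u)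
    then show ?thesis by simp
  qed
  also have "\<dots> = eval2 (\<lambda>x x'. eval2 (\<lambda>y y'. F (m x (\<alpha> y)) (la x' (\<gamma> (d y')))) (\<Delta> (inv \<alpha> g))) (\<Delta> h)"
  proof -
    have "eval2 (\<lambda>y w'. F (m x (\<alpha> y)) (la x' (\<gamma> w'))) (\<phi> (d (inv \<alpha> g))) = eval2 (\<lambda>y y'. F (m x (\<alpha> y)) (la x' (\<gamma> (d y')))) (\<Delta> (inv \<alpha> g))" for x x'
      by (rule \<phi>d_eval[OF vs], rule bilI; intro LL)
    then show ?thesis by simp
  qed
  also have "\<dots> = eval2 (\<lambda>h1 h2. eval2 (\<lambda>g1 g2. F (m h1 g1) (la h2 (d g2))) (\<Delta> g)) (\<Delta> h)"
  proof -
    have "eval2 (\<lambda>y y'. F (m x (\<alpha> y)) (la x' (\<gamma> (d y')))) (\<Delta> (inv \<alpha> g)) = eval2 (\<lambda>y y'. F (m x (\<alpha> (inv \<alpha> y))) (la x' (\<gamma> (d (inv \<alpha> y'))))) (\<Delta> g)" for x x'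
      by (rule \<Delta>i\<alpha>_eval[OF vs], rule bilI; intro LL)
    then show ?thesis by (simp add: d_\<alpha>[symmetric])
  qed
  finally show ?thesis .
qed


lemma lin_scale_lin: "lin sG sG (sG c)" using L_scal[OF vsG L_id[OF vsG]] by simp

lemma teq2I': "(\<And>F. bil sH sG (*) F \<Longrightarrow> eval2 F xs = eval2 F ys) \<Longrightarrow> teq2 sH sG xs ys"
  unfolding teq2_def bilin_bil by blast
lemma bF_scale1': "bil sH sG (*) F \<Longrightarrow> F (sH c x) y = c * F x y"
  using lin_scale[OF bilD(1)] by fastforce
lemma bF_scale2': "bil sH sG (*) F \<Longrightarrow> F x (sG c y) = c * F x y"
  using lin_scale[OF bilD(2)] by fastforce

lemma PP_lin: "lin sG sG PP" unfolding PP_def by (intro LI)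

lemma PP_\<gamma>: "PP (\<gamma> v) = \<gamma> (PP v)"
proof -
  have "PP (\<gamma> v) = eval2 (\<lambda>a w. la (S (\<alpha> a)) (\<gamma> w)) (\<phi> v)"
    unfolding PP_def by (rule \<phi>\<gamma>_eval[OF vsG], rule bilI; intro LI)
  then show ?thesis unfolding PP_def by (simp add: eval2_lin[OF \<gamma>_lin] \<gamma>_la S_\<alpha>)
qed

lemma la_scale1: "la (sH c a) v = sG c (la a v)" using lin_scale[OF la_lin1] by simp
lemma la_m: "la (m a b) w = la (\<alpha> a) (la b (inv \<gamma> w))" using la_assoc[of a b "inv \<gamma> w"] by simp
lemma la_la: "la c (la (inv \<alpha> b) z) = la (inv \<alpha> (m c b)) (\<gamma> z)"
  using la_assoc[of "inv \<alpha> c" "inv \<alpha> b" z] by (simp add: i\<alpha>_m)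

lemma PP_lad: "PP (la h (d g)) = sG (\<epsilon> h) (\<omega> (\<alpha> g))"
proof -
  have "PP (la h (d g)) = eval2 (\<lambda>h1 h2. eval2 (\<lambda>g1 g2. la (S (m h1 g1)) (la h2 (d g2))) (\<Delta> g)) (\<Delta> h)"
    unfolding PP_def by (rule \<phi>lad_eval[OF vsG], rule bilI; intro LI)
  also have "\<dots> = eval2 (\<lambda>h1 h2. eval2 (\<lambda>g1 g2. la (\<alpha> (S g1)) (la (inv \<alpha> (m (S h1) h2)) (d g2))) (\<Delta> g)) (\<Delta> h)"
    by (simp add: S_anti la_m i\<gamma>_la la_la)
  also have "\<dots> = eval2 (\<lambda>g1 g2. la (\<alpha> (S g1)) (la (inv \<alpha> (eval2 (\<lambda>h1 h2. m (S h1) h2) (\<Delta> h))) (d g2))) (\<Delta> g)"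
    by (simp add: eval2_lin[OF la_lin2] eval2_lin[OF la_lin1] eval2_lin[OF i\<alpha>_lin] eval2_swap[where ys="\<Delta> g"])
  also have "\<dots> = sG (\<epsilon> h) (eval2 (\<lambda>x y. la (S (\<alpha> x)) (d (\<alpha> y))) (\<Delta> g))"
    by (simp add: anti_l i\<alpha>_scale la_scale1 lin_scale[OF la_lin2] la_u S_\<alpha> d_\<alpha> eval2_lin[OF lin_scale_lin])
  also have "\<dots> = sG (\<epsilon> h) (\<omega> (\<alpha> g))"
    unfolding \<omega>_def' by (subst \<Delta>\<alpha>_eval[OF vsG], (rule bilI; intro LI), rule refl)
  finally show ?thesis .
qed

lemma PP_d: "PP (d g) = \<omega> g"
proof -
  have "d g = la u (d (inv \<alpha> g))" by (simp add: la_u d_\<alpha>[symmetric])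
  then show ?thesis by (simp add: PP_lad \<epsilon>_u)
qed


lemma span_la: "w \<in> vG.span {la h (d g) | h g. True}"
proof -
  let ?B = "{la h (d g) | h g. True}"
  have "{ra (la h (d g)) f | h g f. True} \<subseteq> vG.span ?B"
  proof clarify
    fix h g f
    have "ra (la h (d g)) f = la (\<alpha> h) (ra (d g) (inv \<alpha> f))" using la_ra[of h "d g" "inv \<alpha> f"] by simp
    also have "\<dots> = la (\<alpha> h) (d (m g (inv \<alpha> f))) - la (m h g) (d f)"
      by (simp add: d_leib lin_add[OF la_lin2] la_assoc d_\<alpha>[symmetric])
    finally have e: "ra (la h (d g)) f = la (\<alpha> h) (d (m g (inv \<alpha> f))) - la (m h g) (d f)" .
    show "ra (la h (d g)) f \<in> vG.span ?B" unfolding e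
      by (rule vG.span_diff; rule vG.span_base; blast)
  qed
  then have "vG.span {ra (la h (d g)) f | h g f. True} \<subseteq> vG.span ?B"
    by (rule vG.span_minimal) simp
  with span_all[of w] show ?thesis by blast
qed

lemma PP_range: "PP v \<in> range \<omega>"
proof -
  have "v \<in> vG.span {la h (d g) | h g. True}" by (rule span_la)
  then show ?thesis
  proof (induct rule: vG.span_induct)
    case base
    show ?case
    proof (rule vG.subspaceI)
      show "0 \<in> Collect (\<lambda>v. PP v \<in> range \<omega>)" by (simp, metis lin_zero[OF PP_lin] lin_zero[OF \<omega>_lin] rangeI)
    next
      fix x y assume "x \<in> Collect (\<lambda>v. PP v \<in> range \<omega>)" "y \<in> Collect (\<lambda>v. PP v \<in> range \<omega>)"
      then obtain a b where "PP x = \<omega> a" "PP y = \<omega> b" by auto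
      then show "x + y \<in> Collect (\<lambda>v. PP v \<in> range \<omega>)" by (simp, metis lin_add[OF PP_lin] lin_add[OF \<omega>_lin] rangeI)
    next
      fix c x assume "x \<in> Collect (\<lambda>v. PP v \<in> range \<omega>)"
      then obtain a where "PP x = \<omega> a" by auto
      then show "sG c x \<in> Collect (\<lambda>v. PP v \<in> range \<omega>)" by (simp, metis lin_scale[OF PP_lin] lin_scale[OF \<omega>_lin] rangeI)
    qed
  next
    case (step x)
    then obtain h g where x: "x = la h (d g)" by blast
    show ?case unfolding x PP_lad by (metis lin_scale[OF \<omega>_lin] rangeI)
  qed
qed

abbreviation "CC \<equiv> coinv sH u sG \<gamma> \<phi>"

lemma C_PP: "v \<in> CC \<Longrightarrow> PP v = v"
  unfolding coinv_def PP_def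
  by (simp, subst teq2_transfer[OF _ vsG], assumption, (intro LI)+, simp add: S_u la_u)


lemma \<omega>_C: "\<omega> g \<in> CC"
  unfolding coinv_def
proof (simp, rule teq2I')
  fix F :: "'h \<Rightarrow> 'g \<Rightarrow> 'k" assume F: "bil sH sG (*) F"
  note LL = LI L_bil1[OF F] L_bil2[OF F]
  have pA: "eval2 F (\<phi> (la a (d b))) = eval2 (\<lambda>p q. eval2 (\<lambda>c e. F (m (S q) c) (la (S p) (d e))) (\<Delta> b)) (\<Delta> a')"
    if "a = S a'" for a a' b
  proof -
    have "eval2 F (\<phi> (la a (d b))) = eval2 (\<lambda>h1 h2. eval2 (\<lambda>g1 g2. F (m h1 g1) (la h2 (d g2))) (\<Delta> b)) (\<Delta> (S a'))"
      unfolding that by (rule \<phi>lad_eval[OF vsk F])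
    also have "\<dots> = eval2 (\<lambda>p q. eval2 (\<lambda>c e. F (m (S q) c) (la (S p) (d e))) (\<Delta> b)) (\<Delta> a')"
      by (rule \<Delta>S_eval[OF vsk], rule bilI; intro LL)
    finally show ?thesis .
  qed
  have p3: "eval2 (\<lambda>c e. F (m (S y0) c) (la A (d e))) (\<Delta> (\<alpha> z0)) = eval2 (\<lambda>c e. F (m (S y0) (\<alpha> c)) (la A (d (\<alpha> e)))) (\<Delta> z0)" for y0 z0 A
    by (rule \<Delta>\<alpha>_eval[OF vsk], rule bilI; intro LL)
  have p4: "eval2 (\<lambda>y0 z0. eval2 (\<lambda>c e. F (m (S y0) (\<alpha> c)) (la A (d (\<alpha> e)))) (\<Delta> z0)) (\<Delta> w) =
      eval2 (\<lambda>w' x'. eval2 (\<lambda>y z. F (m (S (\<alpha> y)) (\<alpha> z)) (la A (d (\<alpha> (inv \<alpha> x'))))) (\<Delta> w')) (\<Delta> w)" for A w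
  proof -
    have "eval2 (\<lambda>w' x'. eval2 (\<lambda>y z. F (m (S (\<alpha> y)) (\<alpha> z)) (la A (d (\<alpha> (inv \<alpha> x'))))) (\<Delta> w')) (\<Delta> w) =
      eval2 (\<lambda>x w. eval2 (\<lambda>y z. F (m (S (\<alpha> (inv \<alpha> x))) (\<alpha> y)) (la A (d (\<alpha> z)))) (\<Delta> w)) (\<Delta> w)"
      by (rule coassoc_eval[of "(*)" "\<lambda>p q r. F (m (S (\<alpha> p)) (\<alpha> q)) (la A (d (\<alpha> r)))"]) (intro LL)+
    then show ?thesis by simp
  qed
  have p5: "eval2 (\<lambda>y z. F (m (\<alpha> (S y)) (\<alpha> z)) B) (\<Delta> w') = \<epsilon> w' * F u B" for B w'
  proof -
    have "eval2 (\<lambda>y z. F (m (\<alpha> (S y)) (\<alpha> z)) B) (\<Delta> w') = F (\<alpha> (eval2 (\<lambda>y z. m (S y) z) (\<Delta> w'))) B"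
      by (simp add: eval2_lin[OF L_bil1[OF F L_\<alpha>[OF L_id[OF vsH]]]] \<alpha>_m)
    also have "\<dots> = \<epsilon> w' * F u B" by (simp add: anti_l \<alpha>_scale \<alpha>_u bF_scale1'[OF F])
    finally show ?thesis .
  qed
  have p6: "eval2 (\<lambda>w' x'. \<epsilon> w' * F u (la A (d x'))) (\<Delta> w) = F u (la A (d (inv \<alpha> w)))" for A w
  proof -
    have "F u (la A (d (inv \<alpha> w))) = F u (la A (d (eval2 (\<lambda>x y. sH (\<epsilon> x) y) (\<Delta> w))))" by (simp add: counit_l)
    also have "\<dots> = eval2 (\<lambda>w' x'. \<epsilon> w' * F u (la A (d x'))) (\<Delta> w)"
      by (simp add: eval2_lin[OF L_bil2[OF F L_la2[OF L_d[OF L_id[OF vsH]]]]] lin_scale[OF d_lin] lin_scale[OF la_lin2] bF_scale2'[OF F])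
    finally show ?thesis by simp
  qed
  have "eval2 F (\<phi> (\<omega> g)) = eval2 (\<lambda>g1 g2. eval2 F (\<phi> (la (S g1) (d g2)))) (\<Delta> g)"
    unfolding \<omega>_def' by (rule eval2_lin[of sG "(*)"]) (intro LL)
  also have "\<dots> = eval2 (\<lambda>g1 g2. eval2 (\<lambda>p q. eval2 (\<lambda>c e. F (m (S q) c) (la (S p) (d e))) (\<Delta> (\<alpha> (inv \<alpha> g2)))) (\<Delta> g1)) (\<Delta> g)"
    by (simp add: pA)
  also have "\<dots> = eval2 (\<lambda>x0 w. eval2 (\<lambda>y0 z0. eval2 (\<lambda>c e. F (m (S y0) c) (la (S (inv \<alpha> x0)) (d e))) (\<Delta> (\<alpha> z0))) (\<Delta> w)) (\<Delta> g)"
    by (rule coassoc_eval[of "(*)" "\<lambda>p q r. eval2 (\<lambda>c e. F (m (S q) c) (la (S p) (d e))) (\<Delta> (\<alpha> r))"]) (intro LL)+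
  also have "\<dots> = eval2 (\<lambda>x0 w. eval2 (\<lambda>w' x'. \<epsilon> w' * F u (la (S (inv \<alpha> x0)) (d x'))) (\<Delta> w)) (\<Delta> g)"
    by (simp only: p3 p4, simp add: S_\<alpha> p5)
  also have "\<dots> = eval2 (\<lambda>x0 w. F u (la (S (inv \<alpha> x0)) (d (inv \<alpha> w)))) (\<Delta> g)"
    by (simp add: p6)
  also have "\<dots> = F u (inv \<gamma> (\<omega> g))"
    unfolding \<omega>_def' by (simp add: eval2_lin[OF L_bil2[OF F L_id[OF vsG]]] eval2_lin[OF i\<gamma>_lin] i\<gamma>_la S_i\<alpha> d_i\<alpha>)
  finally show "eval2 F (\<phi> (\<omega> g)) = eval2 F [(u, inv \<gamma> (\<omega> g))]" by simp
qed

end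

context HH begin

interpretation vG: vector_space sG by (rule vsG)
interpretation vH: vector_space sH by (rule vsH)

abbreviation "TT \<equiv> tangent sH u \<Delta> \<epsilon> S la d"
abbreviation "RGG \<equiv> RG \<Delta> \<epsilon> S la d"

lemma C_eq: "CC = range \<omega>"
proof
  show "CC \<subseteq> range \<omega>" using C_PP PP_range by (metis subsetI)
  show "range \<omega> \<subseteq> CC" using \<omega>_C by blast
qed

lemma C_bij: "bij_betw \<gamma> CC CC"
  unfolding bij_betw_def
proof
  show "inj_on \<gamma> CC" using \<gamma>_bij unfolding bij_def inj_def inj_on_def by blast
  show "\<gamma> ` CC = CC" unfolding C_eq
  proof
    show "\<gamma> ` range \<omega> \<subseteq> range \<omega>" by (auto simp: \<omega>_\<alpha>[symmetric])
    show "range \<omega> \<subseteq> \<gamma> ` range \<omega>"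
    proof
      fix v assume "v \<in> range \<omega>"
      then obtain g where "v = \<omega> g" by blast
      then have "v = \<gamma> (\<omega> (inv \<alpha> g))" by (simp add: \<omega>_\<alpha>[symmetric])
      then show "v \<in> \<gamma> ` range \<omega>" by blast
    qed
  qed
qed

lemma RG_\<alpha>: "h \<in> RGG \<Longrightarrow> \<alpha> h \<in> RGG" and RG_i\<alpha>: "h \<in> RGG \<Longrightarrow> inv \<alpha> h \<in> RGG"
  unfolding RG_def by (auto simp: \<epsilon>_\<alpha> \<omega>_\<alpha> \<omega>_i\<alpha> lin_zero[OF \<gamma>_lin] lin_zero[OF i\<gamma>_lin])

lemma T_D: "X \<in> TT \<Longrightarrow> lin sH (*) X" "X \<in> TT \<Longrightarrow> X u = 0" "X \<in> TT \<Longrightarrow> h \<in> RGG \<Longrightarrow> X h = 0"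
  unfolding tangent_def by auto

lemma T_i\<alpha>: "X \<in> TT \<Longrightarrow> X \<circ> inv \<alpha> \<in> TT"
  unfolding tangent_def using RG_i\<alpha> by (auto simp: o_def intro: lin_compose[OF _ i\<alpha>_lin])
lemma T_\<alpha>: "X \<in> TT \<Longrightarrow> X \<circ> \<alpha> \<in> TT"
  unfolding tangent_def using RG_\<alpha> by (auto simp: o_def \<alpha>_u intro: lin_compose[OF _ \<alpha>_lin])

lemma T_bij: "bij_betw (\<lambda>X. X \<circ> inv \<alpha>) TT TT"
  unfolding bij_betw_def
proof
  show "inj_on (\<lambda>X. X \<circ> inv \<alpha>) TT"
  proof (rule inj_onI)
    fix X Y assume "X \<circ> inv \<alpha> = Y \<circ> inv \<alpha>"
    then have "\<And>x. X (inv \<alpha> (\<alpha> x)) = Y (inv \<alpha> (\<alpha> x))" by (metis comp_apply)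
    then show "X = Y" by auto
  qed
  show "(\<lambda>X. X \<circ> inv \<alpha>) ` TT = TT"
  proof
    show "(\<lambda>X. X \<circ> inv \<alpha>) ` TT \<subseteq> TT" using T_i\<alpha> by blast
    show "TT \<subseteq> (\<lambda>X. X \<circ> inv \<alpha>) ` TT"
    proof
      fix X assume X: "X \<in> TT"
      have "X = (X \<circ> \<alpha>) \<circ> inv \<alpha>" by (auto simp: o_def)
      with T_\<alpha>[OF X] show "X \<in> (\<lambda>X. X \<circ> inv \<alpha>) ` TT" by blast
    qed
  qed
qed

lemma wd: assumes X: "X \<in> TT" and e: "\<omega> g1 = \<omega> g2" shows "X (inv \<alpha> g1) = X (inv \<alpha> g2)"
proof -
  define r where "r = g1 - g2 - sH (\<epsilon> (g1 - g2)) u"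
  have "\<epsilon> r = 0" unfolding r_def by (simp add: lin_diff[OF \<epsilon>_lin] lin_scale[OF \<epsilon>_lin] \<epsilon>_u)
  moreover have "\<omega> r = 0" unfolding r_def by (simp add: lin_diff[OF \<omega>_lin] lin_scale[OF \<omega>_lin] \<omega>_u e)
  ultimately have "r \<in> RGG" by (simp add: RG_def)
  then have "X (inv \<alpha> r) = 0" using T_D(3)[OF X RG_i\<alpha>] by blast
  then show ?thesis unfolding r_def
    by (simp add: lin_diff[OF i\<alpha>_lin] lin_scale[OF i\<alpha>_lin] lin_diff[OF T_D(1)[OF X]] lin_scale[OF T_D(1)[OF X]] T_D(2)[OF X])
qed

definition BB where "BB X v = X (inv \<alpha> (SOME g. \<omega> g = PP v))"

lemma BB_eq: assumes X: "X \<in> TT" and g: "\<omega> g = PP v" shows "BB X v = X (inv \<alpha> g)"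
proof -
  have "\<exists>g. \<omega> g = PP v" using PP_range[of v] by (metis rangeE)
  then have "\<omega> (SOME g. \<omega> g = PP v) = PP v" by (rule someI_ex)
  then show ?thesis unfolding BB_def using wd[OF X] g by metis
qed

lemma BB_lin: assumes X: "X \<in> TT" shows "lin sG (*) (BB X)"
  unfolding linear_iff
proof (intro conjI allI vsG vsk)
  fix v w
  obtain a b where a: "\<omega> a = PP v" and b: "\<omega> b = PP w" using PP_range by (metis rangeE)
  have "\<omega> (a + b) = PP (v + w)" by (simp add: lin_add[OF \<omega>_lin] lin_add[OF PP_lin] a b)
  then show "BB X (v + w) = BB X v + BB X w"
    by (simp add: BB_eq[OF X] BB_eq[OF X a] BB_eq[OF X b] lin_add[OF i\<alpha>_lin] lin_add[OF T_D(1)[OF X]])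
next
  fix c v
  obtain a where a: "\<omega> a = PP v" using PP_range by (metis rangeE)
  have "\<omega> (sH c a) = PP (sG c v)" by (simp add: lin_scale[OF \<omega>_lin] lin_scale[OF PP_lin] a)
  then show "BB X (sG c v) = c * BB X v"
    by (simp add: BB_eq[OF X] BB_eq[OF X a] lin_scale[OF i\<alpha>_lin] lin_scale[OF T_D(1)[OF X]])
qed

lemma BB_good: "good_form sH \<alpha> \<epsilon> sG \<gamma> la d TT BB"
  unfolding good_form_def
proof (intro conjI ballI allI)
  fix X assume X: "X \<in> TT"
  show "lin sG (*) (BB X)" by (rule BB_lin[OF X])
  fix v
  obtain g where g: "\<omega> g = PP v" using PP_range by (metis rangeE)
  have "\<omega> (\<alpha> g) = PP (\<gamma> v)" by (simp add: \<omega>_\<alpha> PP_\<gamma> g)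
  then show "BB (X \<circ> inv \<alpha>) (\<gamma> v) = BB X v"
    using BB_eq[OF T_i\<alpha>[OF X]] BB_eq[OF X g] by simp
next
  fix X Y v show "BB (\<lambda>h. X h + Y h) v = BB X v + BB Y v" by (simp add: BB_def)
next
  fix X c v show "BB (\<lambda>h. c * X h) v = c * BB X v" by (simp add: BB_def)
next
  fix X h g assume X: "X \<in> TT"
  have "\<omega> (sH (\<epsilon> h) (\<alpha> g)) = PP (la h (d g))" by (simp add: PP_lad lin_scale[OF \<omega>_lin])
  then show "BB X (la h (d g)) = \<epsilon> h * X g"
    by (simp add: BB_eq[OF X] lin_scale[OF i\<alpha>_lin] lin_scale[OF T_D(1)[OF X]])
qed

lemma BB_unique: assumes B': "good_form sH \<alpha> \<epsilon> sG \<gamma> la d TT B'" and X: "X \<in> TT"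
  shows "B' X v = BB X v"
proof -
  have l1: "lin sG (*) (B' X)" using B' X by (simp add: good_form_def)
  have l2: "lin sG (*) (BB X)" by (rule BB_lin[OF X])
  have on: "B' X (la h (d g)) = BB X (la h (d g))" for h g
    using B' X BB_good by (simp add: good_form_def)
  have "v \<in> vG.span {la h (d g) | h g. True}" by (rule span_la)
  then show ?thesis
  proof (induct rule: vG.span_induct)
    case base show ?case
      by (rule vG.subspaceI) (simp_all add: lin_zero[OF l1] lin_zero[OF l2] lin_add[OF l1] lin_add[OF l2] lin_scale[OF l1] lin_scale[OF l2])
  next
    case (step x) then show ?case using on by blast
  qed
qed

lemma BB_\<omega>: assumes X: "X \<in> TT" shows "BB X (\<omega> h) = X (inv \<alpha> h)"
  by (rule BB_eq[OF X]) (simp add: C_PP[OF \<omega>_C])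

lemma nondeg1: assumes X: "X \<in> TT" and z: "\<forall>v\<in>CC. BB X v = 0" shows "X = (\<lambda>h. 0)"
proof
  fix h
  have "X h = BB X (\<omega> (\<alpha> h))" by (simp add: BB_\<omega>[OF X])
  also have "\<dots> = 0" using z \<omega>_C by blast
  finally show "X h = 0" .
qed

lemma RG_subspace: "vH.subspace RGG"
  unfolding RG_def
  by (rule vH.subspaceI) (simp_all add: lin_zero[OF \<epsilon>_lin] lin_zero[OF \<omega>_lin] lin_add[OF \<epsilon>_lin] lin_add[OF \<omega>_lin]
     lin_scale[OF \<epsilon>_lin] lin_scale[OF \<omega>_lin])

lemma nondeg2: assumes v: "v \<in> CC" and z: "\<forall>X\<in>TT. BB X v = 0" shows "v = 0"
proof (rule ccontr)
  assume nz: "v \<noteq> 0"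
  obtain h where h: "v = \<omega> h" using v C_eq by blast
  define h' where "h' = h - sH (\<epsilon> h) u"
  have \<omega>h': "\<omega> h' = v" unfolding h'_def by (simp add: h lin_diff[OF \<omega>_lin] lin_scale[OF \<omega>_lin] \<omega>_u)
  have \<epsilon>h': "\<epsilon> h' = 0" unfolding h'_def by (simp add: lin_diff[OF \<epsilon>_lin] lin_scale[OF \<epsilon>_lin] \<epsilon>_u)
  define zz where "zz = inv \<alpha> h'"
  define V where "V = vH.span (insert u RGG)"
  have zV: "zz \<notin> V"
  proof
    assume "zz \<in> V"
    then obtain k where k: "zz - sH k u \<in> vH.span RGG" unfolding V_def vH.span_insert by blast
    then have k': "zz - sH k u \<in> RGG" using RG_subspace by (simp add: vH.span_eq_iff[THEN iffD2])
    then have "\<epsilon> (zz - sH k u) = 0" by (simp add: RG_def)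
    then have "k = 0" by (simp add: lin_diff[OF \<epsilon>_lin] lin_scale[OF \<epsilon>_lin] \<epsilon>_u zz_def \<epsilon>h')
    with k' have "zz \<in> RGG" by simp
    then have "h' \<in> RGG" using RG_\<alpha> unfolding zz_def by fastforce
    then have "\<omega> h' = 0" by (simp add: RG_def)
    with \<omega>h' nz show False by simp
  qed
  obtain B0 where B0: "B0 \<subseteq> V" "vH.independent B0" "V \<subseteq> vH.span B0"
    using vH.maximal_independent_subset[of V] by blast
  have "vH.span B0 \<subseteq> V" using B0(1) unfolding V_def by (simp add: vH.span_minimal)
  then have "zz \<notin> vH.span B0" using zV by blast
  then have ind: "vH.independent (insert zz B0)" by (rule vH.independent_insertI[OF _ B0(2)])
  interpret vp: vector_space_pair sH "(*) :: 'k \<Rightarrow> 'k \<Rightarrow> 'k"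
    using vsH vsk by (simp add: vector_space_pair_def)
  obtain X where X: "lin sH (*) X" "\<forall>x\<in>insert zz B0. X x = (if x = zz then 1 else 0)"
    using vp.linear_independent_extend[OF ind, of "\<lambda>x. if x = zz then 1 else 0"] by blast
  have Xz: "X zz = 1" using X(2) by simp
  have XB: "X b = 0" if "b \<in> B0" for b using X(2) that zV B0(1) by auto
  have XV: "X y = 0" if "y \<in> V" for y
  proof -
    have "y \<in> vH.span B0" using that B0(3) by blast
    then show ?thesis
    proof (induct rule: vH.span_induct)
      case base show ?case
        by (rule vH.subspaceI) (simp_all add: lin_zero[OF X(1)] lin_add[OF X(1)] lin_scale[OF X(1)])
    next
      case (step x) then show ?case using XB by blast
    qed
  qed
  have XT: "X \<in> TT" unfolding tangent_def
    using X(1) XV unfolding V_def by (auto intro: vH.span_base)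
  have "BB X v = X (inv \<alpha> h')" using BB_\<omega>[OF XT, of h'] \<omega>h' by simp
  also have "\<dots> = 1" using Xz zz_def by simp
  finally show False using z XT by simp
qed

lemma main: "\<exists>B. good_form sH \<alpha> \<epsilon> sG \<gamma> la d TT B
          \<and> (\<forall>B'. good_form sH \<alpha> \<epsilon> sG \<gamma> la d TT B' \<longrightarrow> (\<forall>X \<in> TT. \<forall>v. B' X v = B X v))
          \<and> bij_betw (\<lambda>X. X \<circ> inv \<alpha>) TT TT
          \<and> CC = range (omegaG \<Delta> S la d)
          \<and> bij_betw \<gamma> CC CC
          \<and> (\<forall>X \<in> TT. (\<forall>v \<in> CC. B X v = 0) \<longrightarrow> X = (\<lambda>h. 0))
          \<and> (\<forall>v \<in> CC. (\<forall>X \<in> TT. B X v = 0) \<longrightarrow> v = 0)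
          \<and> (\<forall>X \<in> TT. \<forall>h. B X (omegaG \<Delta> S la d h) = X (inv \<alpha> h))"
  apply (rule exI[of _ BB])
  using BB_good BB_unique T_bij C_eq C_bij nondeg1 nondeg2 BB_\<omega> by blast

end

theorem mainTheorem3:
  fixes sH :: "'k::field \<Rightarrow> 'h::ab_group_add \<Rightarrow> 'h"
    and m :: "'h \<Rightarrow> 'h \<Rightarrow> 'h" and u :: 'h and \<alpha> :: "'h \<Rightarrow> 'h"
    and \<Delta> :: "'h \<Rightarrow> ('h \<times> 'h) list" and \<epsilon> :: "'h \<Rightarrow> 'k" and S :: "'h \<Rightarrow> 'h"
    and sG :: "'k \<Rightarrow> 'g::ab_group_add \<Rightarrow> 'g" and \<gamma> :: "'g \<Rightarrow> 'g"
    and la :: "'h \<Rightarrow> 'g \<Rightarrow> 'g" and ra :: "'g \<Rightarrow> 'h \<Rightarrow> 'g"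
    and d :: "'h \<Rightarrow> 'g" and \<phi> :: "'g \<Rightarrow> ('h \<times> 'g) list"
  assumes "mon_hom_hopf sH m u \<alpha> \<Delta> \<epsilon> S"
    and "hom_fodc sH m u \<alpha> sG \<gamma> la ra d"
    and "left_covariant sH m \<alpha> \<Delta> \<epsilon> sG \<gamma> la ra d \<phi>"
  defines "T \<equiv> tangent sH u \<Delta> \<epsilon> S la d"
    and "C \<equiv> coinv sH u sG \<gamma> \<phi>"
  shows "\<exists>B. good_form sH \<alpha> \<epsilon> sG \<gamma> la d T B
          \<and> (\<forall>B'. good_form sH \<alpha> \<epsilon> sG \<gamma> la d T B' \<longrightarrow> (\<forall>X \<in> T. \<forall>v. B' X v = B X v))
          \<and> bij_betw (\<lambda>X. X \<circ> inv \<alpha>) T T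
          \<and> C = range (omegaG \<Delta> S la d)
          \<and> bij_betw \<gamma> C C
          \<and> (\<forall>X \<in> T. (\<forall>v \<in> C. B X v = 0) \<longrightarrow> X = (\<lambda>h. 0))
          \<and> (\<forall>v \<in> C. (\<forall>X \<in> T. B X v = 0) \<longrightarrow> v = 0)
          \<and> (\<forall>X \<in> T. \<forall>h. B X (omegaG \<Delta> S la d h) = X (inv \<alpha> h))"
proof -
  interpret HH sH m u \<alpha> \<Delta> \<epsilon> S sG \<gamma> la ra d \<phi>
    using assms(1) assms(2) assms(3) by (rule HH.intro)
  show ?thesis unfolding T_def C_def by (rule main)
qed

end
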